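(* There is a coreflection $\mathcal{S}\ell\dashv\bigwedge C^{op}$ between the category $\mathbf{Frm}$ of frames and the category of strong topological coframes; that is, $\mathcal S\ell:\mathbf{Frm}\to\mathbf{StrTopCoFrm}$ is left adjoint to $\bigwedge C^{op}$, and the unit $\Omega\to\bigwedge C^{op}(\mathcal S\ell(\Omega))$, $u\mapsto\mathfrak c(u)$, is an isomorphism.
   Context: A coframe is a complete lattice in which arbitrary infima distribute over binary suprema; coframe morphisms preserve arbitrary infima and finite suprema. A topological coframe is a coframe $L$ with a sublattice $C(L)$ of complemented elements (its closed elements); morphisms are coframe morphisms $\varphi$ with $\varphi(C(L))\subseteq C(L')$. A topological coframe is strong if $C(L)$ is closed under arbitrary infima taken in $L$; $\mathbf{StrTopCoFrm}$ denotes the full subcategory of strong ones. The functor $\bigwedge C^{op}$ sends a topological coframe $L$ to the frame $(\bigwedge C(L))^{op}$, where $\bigwedge C(L)$ is the set of infima of elements of $C(L)$ (a subcoframe of $L$), and acts on morphisms by restriction. For a frame $\Omega$, a sublocale is a subset $S\subseteq\Omega$ closed under arbitrary meets and such that $u\Rightarrow s\in S$ for all $u\in\Omega$, $s\in S$ ($\Rightarrow$ the Heyting implication); the sublocales ordered by inclusion form a coframe $\mathcal S\ell(\Omega)$. For $u\in\Omega$, the closed sublocale is $\mathfrak c(u)={\uparrow}u$; it is complemented in $\mathcal S\ell(\Omega)$ and $\mathfrak c:\Omega^{op}\to\mathcal S\ell(\Omega)$ is a coframe order-embedding. $\mathcal S\ell(\Omega)$ is made a topological coframe by $C(\mathcal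 S\ell(\Omega))=\{\mathfrak c(u):u\in\Omega\}$; for a frame morphism $\varphi:\Omega\to\Omega'$, $\mathcal S\ell(\varphi)$ is the unique coframe morphism $\mathcal S\ell(\Omega)\to\mathcal S\ell(\Omega')$ with $\mathfrak c(u)\mapsto\mathfrak c(\varphi(u))$. *)

theory Defs
  imports Main
begin

text \<open>Ordered structures are represented by a carrier set together with an
order relation on it (needed since the sublocales of a frame form a subset of
a powerset, not a type).\<close>

record 'a pos =
  pcarrier :: "'a set"
  ple :: "'a \<Rightarrow> 'a \<Rightarrow> bool"

record 'a tcof = "'a pos" +
  closed :: "'a set"

definition is_poset :: "('a, 'z) pos_scheme \<Rightarrow> bool" where
  "is_poset P \<longleftrightarrow>
     (\<forall>x\<in>pcarrier P. ple P x x) \<and>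
     (\<forall>x\<in>pcarrier P. \<forall>y\<in>pcarrier P. ple P x y \<and> ple P y x \<longrightarrow> x = y) \<and>
     (\<forall>x\<in>pcarrier P. \<forall>y\<in>pcarrier P. \<forall>z\<in>pcarrier P. ple P x y \<and> ple P y z \<longrightarrow> ple P x z)"

definition is_lub :: "('a, 'z) pos_scheme \<Rightarrow> 'a set \<Rightarrow> 'a \<Rightarrow> bool" where
  "is_lub P S x \<longleftrightarrow> x \<in> pcarrier P \<and> (\<forall>s\<in>S. ple P s x) \<and>
     (\<forall>y\<in>pcarrier P. (\<forall>s\<in>S. ple P s y) \<longrightarrow> ple P x y)"

definition is_glb :: "('a, 'z) pos_scheme \<Rightarrow> 'a set \<Rightarrow> 'a \<Rightarrow> bool" where
  "is_glb P S x \<longleftrightarrow> x \<in> pcarrier P \<and> (\<forall>s\<in>S. ple P x s) \<and>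
     (\<forall>y\<in>pcarrier P. (\<forall>s\<in>S. ple P y s) \<longrightarrow> ple P y x)"

definition complete_lat :: "('a, 'z) pos_scheme \<Rightarrow> bool" where
  "complete_lat P \<longleftrightarrow> is_poset P \<and>
     (\<forall>S. S \<subseteq> pcarrier P \<longrightarrow> (\<exists>x. is_lub P S x)) \<and>
     (\<forall>S. S \<subseteq> pcarrier P \<longrightarrow> (\<exists>x. is_glb P S x))"

definition Sup_P :: "('a, 'z) pos_scheme \<Rightarrow> 'a set \<Rightarrow> 'a" where
  "Sup_P P S = (THE x. is_lub P S x)"

definition Inf_P :: "('a, 'z) pos_scheme \<Rightarrow> 'a set \<Rightarrow> 'a" where
  "Inf_P P S = (THE x. is_glb P S x)"

definition join_P :: "('a, 'z) pos_scheme \<Rightarrow> 'a \<Rightarrow> 'a \<Rightarrow> 'a" where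
  "join_P P a b = Sup_P P {a, b}"

definition meet_P :: "('a, 'z) pos_scheme \<Rightarrow> 'a \<Rightarrow> 'a \<Rightarrow> 'a" where
  "meet_P P a b = Inf_P P {a, b}"

definition top_P :: "('a, 'z) pos_scheme \<Rightarrow> 'a" where
  "top_P P = Inf_P P {}"

definition bot_P :: "('a, 'z) pos_scheme \<Rightarrow> 'a" where
  "bot_P P = Sup_P P {}"

definition is_frame :: "('a, 'z) pos_scheme \<Rightarrow> bool" where
  "is_frame P \<longleftrightarrow> complete_lat P \<and>
     (\<forall>a\<in>pcarrier P. \<forall>S. S \<subseteq> pcarrier P \<longrightarrow>
        meet_P P a (Sup_P P S) = Sup_P P ((\<lambda>s. meet_P P a s) ` S))"

definition is_coframe :: "('a, 'z) pos_scheme \<Rightarrow> bool" where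
  "is_coframe P \<longleftrightarrow> complete_lat P \<and>
     (\<forall>a\<in>pcarrier P. \<forall>S. S \<subseteq> pcarrier P \<longrightarrow>
        join_P P a (Inf_P P S) = Inf_P P ((\<lambda>s. join_P P a s) ` S))"

definition frame_hom :: "('a, 'z) pos_scheme \<Rightarrow> ('b, 'y) pos_scheme \<Rightarrow> ('a \<Rightarrow> 'b) \<Rightarrow> bool" where
  "frame_hom P Q f \<longleftrightarrow> f ` pcarrier P \<subseteq> pcarrier Q \<and>
     (\<forall>S. S \<subseteq> pcarrier P \<longrightarrow> f (Sup_P P S) = Sup_P Q (f ` S)) \<and>
     (\<forall>a\<in>pcarrier P. \<forall>b\<in>pcarrier P. f (meet_P P a b) = meet_P Q (f a) (f b)) \<and>
     f (top_P P) = top_P Q"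

definition coframe_hom :: "('a, 'z) pos_scheme \<Rightarrow> ('b, 'y) pos_scheme \<Rightarrow> ('a \<Rightarrow> 'b) \<Rightarrow> bool" where
  "coframe_hom P Q f \<longleftrightarrow> f ` pcarrier P \<subseteq> pcarrier Q \<and>
     (\<forall>S. S \<subseteq> pcarrier P \<longrightarrow> f (Inf_P P S) = Inf_P Q (f ` S)) \<and>
     (\<forall>a\<in>pcarrier P. \<forall>b\<in>pcarrier P. f (join_P P a b) = join_P Q (f a) (f b)) \<and>
     f (bot_P P) = bot_P Q"

definition complemented :: "('a, 'z) pos_scheme \<Rightarrow> 'a \<Rightarrow> bool" where
  "complemented P x \<longleftrightarrow> x \<in> pcarrier P \<and>
     (\<exists>y\<in>pcarrier P. meet_P P x y = bot_P P \<and> join_P P x y = top_P P)"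

definition top_coframe :: "'a tcof \<Rightarrow> bool" where
  "top_coframe L \<longleftrightarrow> is_coframe L \<and>
     (\<forall>x\<in>closed L. complemented L x) \<and>
     bot_P L \<in> closed L \<and> top_P L \<in> closed L \<and>
     (\<forall>x\<in>closed L. \<forall>y\<in>closed L. meet_P L x y \<in> closed L \<and> join_P L x y \<in> closed L)"

definition strong_top_coframe :: "'a tcof \<Rightarrow> bool" where
  "strong_top_coframe L \<longleftrightarrow> top_coframe L \<and>
     (\<forall>T. T \<subseteq> closed L \<longrightarrow> Inf_P L T \<in> closed L)"

definition top_coframe_hom :: "'a tcof \<Rightarrow> 'b tcof \<Rightarrow> ('a \<Rightarrow> 'b) \<Rightarrow> bool" where
  "top_coframe_hom L L' g \<longleftrightarrow> coframe_hom L L' g \<and> g ` closed L \<subseteq> closed L'"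

definition meetC :: "'a tcof \<Rightarrow> 'a set" where
  "meetC L = Inf_P L ` Pow (closed L)"

definition meetC_op :: "'a tcof \<Rightarrow> 'a pos" where
  "meetC_op L = \<lparr>pcarrier = meetC L, ple = (\<lambda>x y. ple L y x)\<rparr>"

definition heyting_imp :: "('a, 'z) pos_scheme \<Rightarrow> 'a \<Rightarrow> 'a \<Rightarrow> 'a" where
  "heyting_imp P u s = Sup_P P {x \<in> pcarrier P. ple P (meet_P P x u) s}"

definition is_sublocale :: "('a, 'z) pos_scheme \<Rightarrow> 'a set \<Rightarrow> bool" where
  "is_sublocale P S \<longleftrightarrow> S \<subseteq> pcarrier P \<and>
     (\<forall>T. T \<subseteq> S \<longrightarrow> Inf_P P T \<in> S) \<and>
     (\<forall>u\<in>pcarrier P. \<forall>s\<in>S. heyting_imp P u s \<in> S)"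

definition closed_subl :: "('a, 'z) pos_scheme \<Rightarrow> 'a \<Rightarrow> 'a set" where
  "closed_subl P u = {x \<in> pcarrier P. ple P u x}"

definition Sl :: "('a, 'z) pos_scheme \<Rightarrow> 'a set tcof" where
  "Sl P = \<lparr>pcarrier = {S. is_sublocale P S}, ple = (\<subseteq>), closed = closed_subl P ` pcarrier P\<rparr>"

end

theory Submission
  imports Defs
begin


lemma Sup_P_eq: "is_poset P \<Longrightarrow> is_lub P S x \<Longrightarrow> Sup_P P S = x"
  unfolding Sup_P_def by (rule the_equality) (auto simp: is_poset_def is_lub_def)

lemma Inf_P_eq: "is_poset P \<Longrightarrow> is_glb P S x \<Longrightarrow> Inf_P P S = x"
  unfolding Inf_P_def by (rule the_equality) (auto simp: is_poset_def is_glb_def)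

locale clat =
  fixes P :: "('a, 'z) pos_scheme"
  assumes cl: "complete_lat P"
begin

abbreviation C where "C \<equiv> pcarrier P"
abbreviation le where "le \<equiv> ple P"

lemma poset: "is_poset P" using cl by (simp add: complete_lat_def)
lemma le_refl[simp]: "x \<in> C \<Longrightarrow> le x x" using poset by (simp add: is_poset_def)
lemma le_antisym: "x \<in> C \<Longrightarrow> y \<in> C \<Longrightarrow> le x y \<Longrightarrow> le y x \<Longrightarrow> x = y"
proof -
  assume h: "x \<in> C" "y \<in> C" "le x y" "le y x"
  have "\<forall>x\<in>C. \<forall>y\<in>C. le x y \<and> le y x \<longrightarrow> x = y" using poset unfolding is_poset_def by (elim conjE)
  thus ?thesis using h by blast
qed
lemma le_trans: "le x y \<Longrightarrow> le y z \<Longrightarrow> x \<in> C \<Longrightarrow> y \<in> C \<Longrightarrow> z \<in> C \<Longrightarrow> le x z"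
proof -
  assume h: "le x y" "le y z" "x \<in> C" "y \<in> C" "z \<in> C"
  have "\<forall>x\<in>C. \<forall>y\<in>C. \<forall>z\<in>C. le x y \<and> le y z \<longrightarrow> le x z" using poset unfolding is_poset_def by (elim conjE)
  thus ?thesis using h by blast
qed

lemma Sup_lub: "S \<subseteq> C \<Longrightarrow> is_lub P S (Sup_P P S)"
proof -
  assume "S \<subseteq> C"
  moreover have "\<forall>S. S \<subseteq> C \<longrightarrow> (\<exists>x. is_lub P S x)" using cl unfolding complete_lat_def by (elim conjE)
  ultimately obtain x where "is_lub P S x" by blast
  thus ?thesis using Sup_P_eq[OF poset] by simp
qed
lemma Inf_glb: "S \<subseteq> C \<Longrightarrow> is_glb P S (Inf_P P S)"
proof -
  assume "S \<subseteq> C"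
  moreover have "\<forall>S. S \<subseteq> C \<longrightarrow> (\<exists>x. is_glb P S x)" using cl unfolding complete_lat_def by (elim conjE)
  ultimately obtain x where "is_glb P S x" by blast
  thus ?thesis using Inf_P_eq[OF poset] by simp
qed

lemma Sup_in[simp]: "S \<subseteq> C \<Longrightarrow> Sup_P P S \<in> C" using Sup_lub[of S] by (simp add: is_lub_def)
lemma Sup_upper: "S \<subseteq> C \<Longrightarrow> s \<in> S \<Longrightarrow> le s (Sup_P P S)" using Sup_lub[of S] by (simp add: is_lub_def)
lemma Sup_least: "S \<subseteq> C \<Longrightarrow> y \<in> C \<Longrightarrow> (\<And>s. s \<in> S \<Longrightarrow> le s y) \<Longrightarrow> le (Sup_P P S) y"
  using Sup_lub[of S] by (simp add: is_lub_def)
lemma Inf_in[simp]: "S \<subseteq> C \<Longrightarrow> Inf_P P S \<in> C" using Inf_glb[of S] by (simp add: is_glb_def)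
lemma Inf_lower: "S \<subseteq> C \<Longrightarrow> s \<in> S \<Longrightarrow> le (Inf_P P S) s" using Inf_glb[of S] by (simp add: is_glb_def)
lemma Inf_greatest: "S \<subseteq> C \<Longrightarrow> y \<in> C \<Longrightarrow> (\<And>s. s \<in> S \<Longrightarrow> le y s) \<Longrightarrow> le y (Inf_P P S)"
  using Inf_glb[of S] by (simp add: is_glb_def)

lemma Sup_eq: "is_lub P S x \<Longrightarrow> Sup_P P S = x" by (rule Sup_P_eq[OF poset])
lemma Inf_eq: "is_glb P S x \<Longrightarrow> Inf_P P S = x" by (rule Inf_P_eq[OF poset])

lemma join_in[simp]: "a \<in> C \<Longrightarrow> b \<in> C \<Longrightarrow> join_P P a b \<in> C" by (simp add: join_P_def)
lemma meet_in[simp]: "a \<in> C \<Longrightarrow> b \<in> C \<Longrightarrow> meet_P P a b \<in> C" by (simp add: meet_P_def)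
lemma top_in[simp]: "top_P P \<in> C" by (simp add: top_P_def)
lemma bot_in[simp]: "bot_P P \<in> C" by (simp add: bot_P_def)

lemma join_le_iff: "a \<in> C \<Longrightarrow> b \<in> C \<Longrightarrow> z \<in> C \<Longrightarrow> le (join_P P a b) z \<longleftrightarrow> le a z \<and> le b z"
proof -
  assume h: "a \<in> C" "b \<in> C" "z \<in> C"
  hence s: "{a,b} \<subseteq> C" by auto
  show ?thesis unfolding join_P_def
    using Sup_upper[OF s] Sup_least[OF s] le_trans[of _ "Sup_P P {a,b}" z] h Sup_in[OF s] by blast
qed
lemma le_meet_iff: "a \<in> C \<Longrightarrow> b \<in> C \<Longrightarrow> z \<in> C \<Longrightarrow> le z (meet_P P a b) \<longleftrightarrow> le z a \<and> le z b"
proof -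
  assume h: "a \<in> C" "b \<in> C" "z \<in> C"
  hence s: "{a,b} \<subseteq> C" by auto
  show ?thesis unfolding meet_P_def
    using Inf_lower[OF s] Inf_greatest[OF s] le_trans[of z "Inf_P P {a,b}"] h Inf_in[OF s] by blast
qed
lemma join_ge1: "a \<in> C \<Longrightarrow> b \<in> C \<Longrightarrow> le a (join_P P a b)" using join_le_iff[of a b "join_P P a b"] by simp
lemma join_ge2: "a \<in> C \<Longrightarrow> b \<in> C \<Longrightarrow> le b (join_P P a b)" using join_le_iff[of a b "join_P P a b"] by simp
lemma meet_le1: "a \<in> C \<Longrightarrow> b \<in> C \<Longrightarrow> le (meet_P P a b) a" using le_meet_iff[of a b "meet_P P a b"] by simp
lemma meet_le2: "a \<in> C \<Longrightarrow> b \<in> C \<Longrightarrow> le (meet_P P a b) b" using le_meet_iff[of a b "meet_P P a b"] by simp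
lemma join_comm: "join_P P a b = join_P P b a" by (simp add: join_P_def insert_commute)
lemma meet_comm: "meet_P P a b = meet_P P b a" by (simp add: meet_P_def insert_commute)
lemma top_greatest: "x \<in> C \<Longrightarrow> le x (top_P P)" unfolding top_P_def by (rule Inf_greatest) auto
lemma bot_least: "x \<in> C \<Longrightarrow> le (bot_P P) x" unfolding bot_P_def by (rule Sup_least) auto

lemma eq_by_le: "x \<in> C \<Longrightarrow> y \<in> C \<Longrightarrow> (\<And>z. z \<in> C \<Longrightarrow> le z x \<longleftrightarrow> le z y) \<Longrightarrow> x = y"
  using le_antisym le_refl by metis
lemma eq_by_ge: "x \<in> C \<Longrightarrow> y \<in> C \<Longrightarrow> (\<And>z. z \<in> C \<Longrightarrow> le x z \<longleftrightarrow> le y z) \<Longrightarrow> x = y"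
  using le_antisym le_refl by metis

lemma meet_mono: "le a a' \<Longrightarrow> le b b' \<Longrightarrow> a \<in> C \<Longrightarrow> a' \<in> C \<Longrightarrow> b \<in> C \<Longrightarrow> b' \<in> C \<Longrightarrow> le (meet_P P a b) (meet_P P a' b')"
  using le_meet_iff[of a' b' "meet_P P a b"] meet_le1[of a b] meet_le2[of a b] le_trans[of "meet_P P a b" a a'] le_trans[of "meet_P P a b" b b'] by simp
lemma join_mono: "le a a' \<Longrightarrow> le b b' \<Longrightarrow> a \<in> C \<Longrightarrow> a' \<in> C \<Longrightarrow> b \<in> C \<Longrightarrow> b' \<in> C \<Longrightarrow> le (join_P P a b) (join_P P a' b')"
  using join_le_iff[of a b "join_P P a' b'"] join_ge1[of a' b'] join_ge2[of a' b'] le_trans[of a a' "join_P P a' b'"] le_trans[of b b' "join_P P a' b'"] by simp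
lemma meet_top: "a \<in> C \<Longrightarrow> meet_P P (top_P P) a = a"
  using le_antisym[of "meet_P P (top_P P) a" a] meet_le2[of "top_P P" a] le_meet_iff[of "top_P P" a a] top_greatest[of a] by simp
lemma join_bot: "a \<in> C \<Longrightarrow> join_P P a (bot_P P) = a"
  using le_antisym[of "join_P P a (bot_P P)" a] join_ge1[of a "bot_P P"] join_le_iff[of a "bot_P P" a] bot_least[of a] by simp
lemma meet_eq_left: "le a b \<Longrightarrow> a \<in> C \<Longrightarrow> b \<in> C \<Longrightarrow> meet_P P a b = a"
  using le_antisym[of "meet_P P a b" a] meet_le1[of a b] le_meet_iff[of a b a] by simp
lemma join_eq_right: "le a b \<Longrightarrow> a \<in> C \<Longrightarrow> b \<in> C \<Longrightarrow> join_P P a b = b"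
  using le_antisym[of "join_P P a b" b] join_ge2[of a b] join_le_iff[of a b b] by simp
lemma Inf_mono: "A \<subseteq> C \<Longrightarrow> B \<subseteq> C \<Longrightarrow> (\<And>b. b \<in> B \<Longrightarrow> \<exists>a\<in>A. le a b) \<Longrightarrow> le (Inf_P P A) (Inf_P P B)"
proof -
  assume h: "A \<subseteq> C" "B \<subseteq> C" "\<And>b. b \<in> B \<Longrightarrow> \<exists>a\<in>A. le a b"
  show ?thesis
  proof (rule Inf_greatest[OF h(2)])
    show "Inf_P P A \<in> C" using h by simp
    fix b assume b: "b \<in> B"
    then obtain a where a: "a \<in> A" "le a b" using h by blast
    show "le (Inf_P P A) b" using le_trans[OF Inf_lower[OF h(1) a(1)] a(2)] a h b by auto
  qed
qed

end


definition nu :: "('a, 'z) pos_scheme \<Rightarrow> 'a set \<Rightarrow> 'a \<Rightarrow> 'a" where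
  "nu P S a = Inf_P P {s \<in> S. ple P a s}"
definition Dset :: "('a, 'z) pos_scheme \<Rightarrow> 'a \<Rightarrow> 'a \<Rightarrow> 'a set" where
  "Dset P x y = {z \<in> pcarrier P. ple P (heyting_imp P y z) (heyting_imp P x z)}"
definition opn :: "('a, 'z) pos_scheme \<Rightarrow> 'a \<Rightarrow> 'a set" where
  "opn P u = {x \<in> pcarrier P. heyting_imp P u x = x}"

locale frm = clat +
  assumes dist: "a \<in> C \<Longrightarrow> S \<subseteq> C \<Longrightarrow> meet_P P a (Sup_P P S) = Sup_P P ((\<lambda>s. meet_P P a s) ` S)"
begin

abbreviation mt where "mt \<equiv> meet_P P"
abbreviation jn where "jn \<equiv> join_P P"
abbreviation tp where "tp \<equiv> top_P P"
abbreviation bt where "bt \<equiv> bot_P P"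
abbreviation imp where "imp \<equiv> heyting_imp P"
abbreviation subl where "subl \<equiv> is_sublocale P"

lemma imp_in[simp]: "imp u s \<in> C"
  unfolding heyting_imp_def by (rule Sup_in) auto

lemma imp_adj: assumes "u \<in> C" "s \<in> C" "x \<in> C" shows "le x (imp u s) \<longleftrightarrow> le (mt x u) s"
proof
  assume "le (mt x u) s"
  thus "le x (imp u s)" unfolding heyting_imp_def using assms by (intro Sup_upper) auto
next
  assume h: "le x (imp u s)"
  define X where "X = {x \<in> C. le (mt x u) s}"
  have X: "X \<subseteq> C" unfolding X_def by auto
  have 1: "le (mt x u) (mt (imp u s) u)" using meet_mono[OF h le_refl[of u]] assms by simp
  have "mt (imp u s) u = mt u (Sup_P P X)" unfolding heyting_imp_def X_def by (rule meet_comm)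
  also have "\<dots> = Sup_P P ((\<lambda>y. mt u y) ` X)" using dist[OF assms(1) X] .
  finally have 2: "mt (imp u s) u = Sup_P P ((\<lambda>y. mt u y) ` X)" .
  have 3: "le (Sup_P P ((\<lambda>y. mt u y) ` X)) s"
  proof (rule Sup_least)
    show "(\<lambda>y. mt u y) ` X \<subseteq> C" using X assms by auto
    show "s \<in> C" by fact
    fix z assume "z \<in> (\<lambda>y. mt u y) ` X"
    then obtain y where "y \<in> X" "z = mt u y" by auto
    thus "le z s" unfolding X_def by (simp add: meet_comm)
  qed
  show "le (mt x u) s" using le_trans[OF 1 3[folded 2]] assms by simp
qed

lemma meet_assoc: "a \<in> C \<Longrightarrow> b \<in> C \<Longrightarrow> c \<in> C \<Longrightarrow> mt (mt a b) c = mt a (mt b c)"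
  by (rule eq_by_le) (auto simp: le_meet_iff)

lemma imp_ge: "u \<in> C \<Longrightarrow> s \<in> C \<Longrightarrow> le s (imp u s)"
  using imp_adj meet_le1 by simp
lemma imp_mp: "u \<in> C \<Longrightarrow> s \<in> C \<Longrightarrow> le (mt (imp u s) u) s"
  using imp_adj[of u s "imp u s"] by simp
lemma imp_mp': "u \<in> C \<Longrightarrow> s \<in> C \<Longrightarrow> le (mt u (imp u s)) s"
  using imp_mp by (simp add: meet_comm)
lemma imp_mono2: "u \<in> C \<Longrightarrow> s \<in> C \<Longrightarrow> s' \<in> C \<Longrightarrow> le s s' \<Longrightarrow> le (imp u s) (imp u s')"
  using imp_adj[of u s' "imp u s"] imp_mp[of u s] le_trans[of "mt (imp u s) u" s s'] by simp
lemma imp_top_iff: "u \<in> C \<Longrightarrow> s \<in> C \<Longrightarrow> imp u s = tp \<longleftrightarrow> le u s"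
proof
  assume "u \<in> C" "s \<in> C" "imp u s = tp"
  thus "le u s" using imp_adj[of u s tp] meet_top by simp
next
  assume h: "u \<in> C" "s \<in> C" "le u s"
  hence "le tp (imp u s)" using imp_adj[of u s tp] meet_top by simp
  thus "imp u s = tp" using le_antisym top_greatest h by simp
qed
lemma le_imp_top: "u \<in> C \<Longrightarrow> s \<in> C \<Longrightarrow> le tp (imp u s) \<longleftrightarrow> le u s"
  using imp_top_iff[of u s] le_antisym[of tp "imp u s"] top_greatest[of "imp u s"] by auto
lemma imp_swap: "u \<in> C \<Longrightarrow> w \<in> C \<Longrightarrow> x \<in> C \<Longrightarrow> imp u (imp w x) = imp w (imp u x)"
proof (rule eq_by_le)
  fix z assume h: "u \<in> C" "w \<in> C" "x \<in> C" "z \<in> C"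
  have "le z (imp u (imp w x)) \<longleftrightarrow> le (mt (mt z u) w) x" using h imp_adj by simp
  also have "mt (mt z u) w = mt (mt z w) u" using h meet_assoc[of z u w] meet_assoc[of z w u] meet_comm[of u w] by simp
  also have "le (mt (mt z w) u) x \<longleftrightarrow> le z (imp w (imp u x))" using h imp_adj by simp
  finally show "le z (imp u (imp w x)) \<longleftrightarrow> le z (imp w (imp u x))" .
qed simp_all
lemma imp_idem: "u \<in> C \<Longrightarrow> x \<in> C \<Longrightarrow> imp u (imp u x) = imp u x"
proof (rule eq_by_le)
  fix z assume h: "u \<in> C" "x \<in> C" "z \<in> C"
  have "le z (imp u (imp u x)) \<longleftrightarrow> le (mt (mt z u) u) x" using h imp_adj by simp
  also have "mt (mt z u) u = mt z u" using h meet_assoc meet_eq_left[of u u] by simp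
  also have "le (mt z u) x \<longleftrightarrow> le z (imp u x)" using h imp_adj by simp
  finally show "le z (imp u (imp u x)) \<longleftrightarrow> le z (imp u x)" .
qed simp_all
lemma imp_meet_self: "s \<in> C \<Longrightarrow> t \<in> C \<Longrightarrow> imp s (mt s t) = imp s t"
proof (rule eq_by_le)
  fix z assume h: "s \<in> C" "t \<in> C" "z \<in> C"
  have "le z (imp s (mt s t)) \<longleftrightarrow> le (mt z s) (mt s t)" using h imp_adj by simp
  also have "\<dots> \<longleftrightarrow> le (mt z s) t" using h le_meet_iff meet_le2 by auto
  also have "\<dots> \<longleftrightarrow> le z (imp s t)" using h imp_adj by simp
  finally show "le z (imp s (mt s t)) \<longleftrightarrow> le z (imp s t)" .
qed simp_all
lemma meet_imp_eq: "s \<in> C \<Longrightarrow> x \<in> C \<Longrightarrow> le x s \<Longrightarrow> mt s (imp s x) = x"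
  using le_antisym[of "mt s (imp s x)" x] imp_mp'[of s x] le_meet_iff[of s "imp s x" x] imp_ge[of s x]
  by simp

lemma subl_sub: "subl S \<Longrightarrow> S \<subseteq> C" by (simp add: is_sublocale_def)
lemma subl_Inf: "subl S \<Longrightarrow> T \<subseteq> S \<Longrightarrow> Inf_P P T \<in> S" by (simp add: is_sublocale_def)
lemma subl_imp: "subl S \<Longrightarrow> u \<in> C \<Longrightarrow> s \<in> S \<Longrightarrow> imp u s \<in> S" by (simp add: is_sublocale_def)
lemma subl_top: "subl S \<Longrightarrow> tp \<in> S" unfolding top_P_def using subl_Inf by blast
lemma subl_meet: "subl S \<Longrightarrow> s \<in> S \<Longrightarrow> t \<in> S \<Longrightarrow> mt s t \<in> S"
  unfolding meet_P_def using subl_Inf by simp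

lemma nu_set_sub: "subl S \<Longrightarrow> {s \<in> S. le a s} \<subseteq> C" using subl_sub by auto
lemma nu_in: "subl S \<Longrightarrow> nu P S a \<in> S" unfolding nu_def using subl_Inf by simp
lemma nu_inC[simp]: "subl S \<Longrightarrow> nu P S a \<in> C" using nu_in subl_sub by blast
lemma nu_ge: "subl S \<Longrightarrow> a \<in> C \<Longrightarrow> le a (nu P S a)"
  unfolding nu_def by (rule Inf_greatest) (auto dest: subl_sub)
lemma nu_least: "subl S \<Longrightarrow> s \<in> S \<Longrightarrow> le a s \<Longrightarrow> le (nu P S a) s"
  unfolding nu_def by (rule Inf_lower) (auto dest: subl_sub)
lemma nu_fix: "subl S \<Longrightarrow> x \<in> S \<Longrightarrow> nu P S x = x"
proof -
  assume h: "subl S" "x \<in> S"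
  hence x: "x \<in> C" using subl_sub by blast
  show ?thesis using le_antisym[of "nu P S x" x] nu_least[OF h le_refl[OF x]] nu_ge[OF h(1) x] x h by simp
qed

end


lemma Sl_simps[simp]: "pcarrier (Sl P) = {S. is_sublocale P S}" "ple (Sl P) = (\<subseteq>)"
  "closed (Sl P) = closed_subl P ` pcarrier P"
  by (simp_all add: Sl_def)

definition genl :: "('a, 'z) pos_scheme \<Rightarrow> 'a set set \<Rightarrow> 'a set" where
  "genl P SS = pcarrier P \<inter> \<Inter>{U. is_sublocale P U \<and> \<Union>SS \<subseteq> U}"

context frm begin

lemma subl_Int: "\<forall>U\<in>UU. subl U \<Longrightarrow> subl (C \<inter> \<Inter>UU)"
proof -
  assume h: "\<forall>U\<in>UU. subl U"
  have 1: "\<And>T. T \<subseteq> C \<inter> \<Inter> UU \<Longrightarrow> Inf_P P T \<in> C \<inter> \<Inter> UU"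
  proof -
    fix T assume T: "T \<subseteq> C \<inter> \<Inter> UU"
    have "\<And>U. U \<in> UU \<Longrightarrow> Inf_P P T \<in> U"
    proof -
      fix U assume U: "U \<in> UU"
      hence "T \<subseteq> U" using T by blast
      thus "Inf_P P T \<in> U" using subl_Inf h U by blast
    qed
    moreover have "Inf_P P T \<in> C" using T by simp
    ultimately show "Inf_P P T \<in> C \<inter> \<Inter> UU" by blast
  qed
  have 2: "\<And>u s. u \<in> C \<Longrightarrow> s \<in> C \<inter> \<Inter> UU \<Longrightarrow> imp u s \<in> C \<inter> \<Inter> UU"
  proof -
    fix u s assume u: "u \<in> C" and s: "s \<in> C \<inter> \<Inter> UU"
    have "\<And>U. U \<in> UU \<Longrightarrow> imp u s \<in> U" using subl_imp h u s by blast
    thus "imp u s \<in> C \<inter> \<Inter> UU" by simp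
  qed
  show ?thesis unfolding is_sublocale_def using 1 2 by blast
qed

lemma subl_C: "subl C" unfolding is_sublocale_def by simp

lemma Sl_poset: "is_poset (Sl P)" unfolding is_poset_def by auto

lemma Sl_glb: "SS \<subseteq> pcarrier (Sl P) \<Longrightarrow> is_glb (Sl P) SS (C \<inter> \<Inter>SS)"
  unfolding is_glb_def using subl_Int[of SS] subl_sub by auto

lemma Sl_lub: "SS \<subseteq> pcarrier (Sl P) \<Longrightarrow> is_lub (Sl P) SS (genl P SS)"
proof -
  assume h: "SS \<subseteq> pcarrier (Sl P)"
  have 1: "subl (genl P SS)" unfolding genl_def using subl_Int[of "{U. subl U \<and> \<Union>SS \<subseteq> U}"] by simp
  have 2: "\<And>S. S \<in> SS \<Longrightarrow> S \<subseteq> genl P SS" unfolding genl_def using h subl_sub by auto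
  have 3: "\<And>Y. subl Y \<Longrightarrow> (\<forall>S\<in>SS. S \<subseteq> Y) \<Longrightarrow> genl P SS \<subseteq> Y" unfolding genl_def by blast
  show ?thesis unfolding is_lub_def using 1 2 3 by simp
qed

lemma Sl_clat: "complete_lat (Sl P)"
  unfolding complete_lat_def using Sl_poset Sl_glb Sl_lub by blast

end

sublocale frm \<subseteq> SL: clat "Sl P" unfolding clat_def by (rule Sl_clat)

context frm begin

abbreviation cs where "cs \<equiv> closed_subl P"

lemma Inf_Sl: "SS \<subseteq> pcarrier (Sl P) \<Longrightarrow> Inf_P (Sl P) SS = C \<inter> \<Inter>SS"
  by (rule SL.Inf_eq[OF Sl_glb])

lemma meet_Sl: "subl S \<Longrightarrow> subl T \<Longrightarrow> meet_P (Sl P) S T = S \<inter> T"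
  unfolding meet_P_def using Inf_Sl[of "{S,T}"] subl_sub by auto

lemma top_Sl: "top_P (Sl P) = C" unfolding top_P_def using Inf_Sl[of "{}"] by simp

lemma subl_single_top: "subl {tp}"
  unfolding is_sublocale_def
proof (intro conjI allI impI ballI)
  show "{tp} \<subseteq> C" by simp
  fix T assume "T \<subseteq> {tp}"
  hence "T = {} \<or> T = {tp}" by blast
  moreover have "Inf_P P {tp} = tp" by (rule Inf_eq) (simp add: is_glb_def top_greatest)
  ultimately show "Inf_P P T \<in> {tp}" by (auto simp: top_P_def)
next
  fix u s assume "u \<in> C" "s \<in> {tp}"
  thus "imp u s \<in> {tp}" using imp_top_iff top_greatest by simp
qed

lemma bot_Sl: "bot_P (Sl P) = {tp}"
  unfolding bot_P_def
  by (rule SL.Sup_eq) (auto simp: is_lub_def subl_single_top subl_top)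

lemma join_Sl_eq: "subl S \<Longrightarrow> subl T \<Longrightarrow> subl V \<Longrightarrow> S \<subseteq> V \<Longrightarrow> T \<subseteq> V \<Longrightarrow>
   (\<And>U. subl U \<Longrightarrow> S \<subseteq> U \<Longrightarrow> T \<subseteq> U \<Longrightarrow> V \<subseteq> U) \<Longrightarrow> join_P (Sl P) S T = V"
  unfolding join_P_def by (rule SL.Sup_eq) (auto simp: is_lub_def)

lemma join_Sl_subl: "subl S \<Longrightarrow> subl T \<Longrightarrow> subl (join_P (Sl P) S T)"
  using SL.join_in by simp
lemma join_Sl_ge1: "subl S \<Longrightarrow> subl T \<Longrightarrow> S \<subseteq> join_P (Sl P) S T"
  using SL.join_ge1 by simp
lemma join_Sl_ge2: "subl S \<Longrightarrow> subl T \<Longrightarrow> T \<subseteq> join_P (Sl P) S T"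
  using SL.join_ge2 by simp
lemma join_Sl_least: "subl S \<Longrightarrow> subl T \<Longrightarrow> subl U \<Longrightarrow> S \<subseteq> U \<Longrightarrow> T \<subseteq> U \<Longrightarrow> join_P (Sl P) S T \<subseteq> U"
  using SL.join_le_iff[of S T U] by simp

end


context frm begin

lemma cs_def': "cs u = {x \<in> C. le u x}" by (simp add: closed_subl_def)

lemma meet_join_dist: "a \<in> C \<Longrightarrow> b \<in> C \<Longrightarrow> c \<in> C \<Longrightarrow> mt a (jn b c) = jn (mt a b) (mt a c)"
  unfolding join_P_def using dist[of a "{b,c}"] by simp

lemma cs_subl: "u \<in> C \<Longrightarrow> subl (cs u)"
proof -
  assume u: "u \<in> C"
  have 1: "\<And>T. T \<subseteq> cs u \<Longrightarrow> Inf_P P T \<in> cs u"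
  proof -
    fix T assume T: "T \<subseteq> cs u"
    hence TC: "T \<subseteq> C" unfolding cs_def' by blast
    have "le u (Inf_P P T)" using Inf_greatest[OF TC u] T unfolding cs_def' by blast
    thus "Inf_P P T \<in> cs u" using TC unfolding cs_def' by simp
  qed
  have 2: "\<And>w x. w \<in> C \<Longrightarrow> x \<in> cs u \<Longrightarrow> imp w x \<in> cs u"
  proof -
    fix w x assume w: "w \<in> C" and x: "x \<in> cs u"
    hence "x \<in> C" "le u x" unfolding cs_def' by auto
    hence "le u (imp w x)" using le_trans[of u x "imp w x"] imp_ge[OF w] u by simp
    thus "imp w x \<in> cs u" unfolding cs_def' by simp
  qed
  show ?thesis unfolding is_sublocale_def using 1 2 unfolding cs_def' by blast
qed

lemma opn_subl: "u \<in> C \<Longrightarrow> subl (opn P u)"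
proof -
  assume u: "u \<in> C"
  have 1: "\<And>T. T \<subseteq> opn P u \<Longrightarrow> Inf_P P T \<in> opn P u"
  proof -
    fix T assume T: "T \<subseteq> opn P u"
    hence TC: "T \<subseteq> C" unfolding opn_def by blast
    have "le (imp u (Inf_P P T)) (Inf_P P T)"
    proof (rule Inf_greatest[OF TC])
      show "imp u (Inf_P P T) \<in> C" by simp
      fix t assume t: "t \<in> T"
      hence "t \<in> C" "imp u t = t" using T unfolding opn_def by auto
      thus "le (imp u (Inf_P P T)) t"
        using imp_mono2[OF u _ _ Inf_lower[OF TC t]] TC by simp
    qed
    hence "imp u (Inf_P P T) = Inf_P P T" using le_antisym imp_ge[OF u] TC by simp
    thus "Inf_P P T \<in> opn P u" using TC unfolding opn_def by simp
  qed
  have 2: "\<And>w x. w \<in> C \<Longrightarrow> x \<in> opn P u \<Longrightarrow> imp w x \<in> opn P u"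
  proof -
    fix w x assume w: "w \<in> C" and x: "x \<in> opn P u"
    hence "x \<in> C" "imp u x = x" unfolding opn_def by auto
    hence "imp u (imp w x) = imp w x" using imp_swap[OF u w] by simp
    thus "imp w x \<in> opn P u" unfolding opn_def by simp
  qed
  show ?thesis unfolding is_sublocale_def using 1 2 unfolding opn_def by blast
qed

lemma Dset_subl: assumes x: "x \<in> C" and y: "y \<in> C" shows "subl (Dset P x y)"
proof -
  have 1: "\<And>T. T \<subseteq> Dset P x y \<Longrightarrow> Inf_P P T \<in> Dset P x y"
  proof -
    fix T assume T: "T \<subseteq> Dset P x y"
    hence TC: "T \<subseteq> C" unfolding Dset_def by blast
    let ?I = "Inf_P P T"
    have "le (mt (imp y ?I) x) ?I"
    proof (rule Inf_greatest[OF TC])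
      show "mt (imp y ?I) x \<in> C" using x by simp
      fix t assume t: "t \<in> T"
      hence tC: "t \<in> C" and tD: "le (imp y t) (imp x t)" using T unfolding Dset_def by auto
      have "le (imp y ?I) (imp y t)" using imp_mono2[OF y _ tC Inf_lower[OF TC t]] TC by simp
      hence "le (imp y ?I) (imp x t)" using le_trans[OF _ tD] by simp
      thus "le (mt (imp y ?I) x) t" using imp_adj[OF x tC] by simp
    qed
    hence "le (imp y ?I) (imp x ?I)" using imp_adj[OF x] TC by simp
    thus "?I \<in> Dset P x y" using TC unfolding Dset_def by simp
  qed
  have 2: "\<And>w z. w \<in> C \<Longrightarrow> z \<in> Dset P x y \<Longrightarrow> imp w z \<in> Dset P x y"
  proof -
    fix w z assume w: "w \<in> C" and z: "z \<in> Dset P x y"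
    hence zC: "z \<in> C" and zD: "le (imp y z) (imp x z)" unfolding Dset_def by auto
    have "imp y (imp w z) = imp w (imp y z)" using imp_swap[OF y w zC] .
    moreover have "le (imp w (imp y z)) (imp w (imp x z))" using imp_mono2[OF w _ _ zD] by simp
    moreover have "imp w (imp x z) = imp x (imp w z)" using imp_swap[OF w x zC] .
    ultimately show "imp w z \<in> Dset P x y" unfolding Dset_def by simp
  qed
  show ?thesis unfolding is_sublocale_def using 1 2 unfolding Dset_def by blast
qed

lemma cs_sub_D: "x \<in> C \<Longrightarrow> y \<in> C \<Longrightarrow> cs x \<subseteq> Dset P x y"
proof
  fix z assume x: "x \<in> C" and y: "y \<in> C" and z: "z \<in> cs x"
  hence zC: "z \<in> C" and "le x z" unfolding cs_def' by auto
  hence "imp x z = tp" using imp_top_iff[OF x zC] by simp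
  thus "z \<in> Dset P x y" unfolding Dset_def using zC top_greatest by simp
qed

lemma opn_sub_D: "x \<in> C \<Longrightarrow> y \<in> C \<Longrightarrow> opn P y \<subseteq> Dset P x y"
proof
  fix z assume x: "x \<in> C" and y: "y \<in> C" and z: "z \<in> opn P y"
  hence zC: "z \<in> C" and "imp y z = z" unfolding opn_def by auto
  thus "z \<in> Dset P x y" unfolding Dset_def using imp_ge[OF x zC] by simp
qed

lemma D_least: assumes x: "x \<in> C" and y: "y \<in> C" and U: "subl U" "cs x \<subseteq> U" "opn P y \<subseteq> U"
  shows "Dset P x y \<subseteq> U"
proof
  fix z assume z: "z \<in> Dset P x y"
  hence zC: "z \<in> C" and zD: "le (imp y z) (imp x z)" unfolding Dset_def by auto
  have j: "jn x z \<in> cs x" unfolding cs_def' using join_ge1[OF x zC] x zC by simp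
  have o: "imp y z \<in> opn P y" unfolding opn_def using imp_idem[OF y zC] by simp
  have m: "mt (jn x z) (imp y z) \<in> U" using subl_meet[OF U(1)] j o U by blast
  have le1: "le z (mt (jn x z) (imp y z))"
    using le_meet_iff[of "jn x z" "imp y z" z] join_ge2[OF x zC] imp_ge[OF y zC] x zC by simp
  have "mt (jn x z) (imp y z) = jn (mt (imp y z) x) (mt (imp y z) z)"
    using meet_comm meet_join_dist[of "imp y z" x z] x zC by simp
  moreover have "le (mt (imp y z) x) z" using imp_adj[OF x zC, of "imp y z"] zD by simp
  moreover have "le (mt (imp y z) z) z" using meet_le2 zC by simp
  ultimately have le2: "le (mt (jn x z) (imp y z)) z" using join_le_iff x zC by simp
  have "z = mt (jn x z) (imp y z)" using le_antisym le1 le2 x zC by simp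
  thus "z \<in> U" using m by simp
qed

lemma join_cs_opn: "x \<in> C \<Longrightarrow> y \<in> C \<Longrightarrow> join_P (Sl P) (cs x) (opn P y) = Dset P x y"
  by (rule join_Sl_eq) (simp_all add: cs_subl opn_subl Dset_subl cs_sub_D opn_sub_D D_least)

lemma D_self: "u \<in> C \<Longrightarrow> Dset P u u = C"
  unfolding Dset_def by auto

lemma cs_opn_meet: "u \<in> C \<Longrightarrow> cs u \<inter> opn P u = {tp}"
proof
  assume u: "u \<in> C"
  show "cs u \<inter> opn P u \<subseteq> {tp}"
  proof
    fix x assume "x \<in> cs u \<inter> opn P u"
    hence x: "x \<in> C" "le u x" "imp u x = x" unfolding cs_def' opn_def by auto
    thus "x \<in> {tp}" using imp_top_iff[OF u x(1)] by simp
  qed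
  show "{tp} \<subseteq> cs u \<inter> opn P u"
    unfolding cs_def' opn_def using u top_greatest imp_top_iff[OF u top_in] by simp
qed

lemma cs_meet: "a \<in> C \<Longrightarrow> b \<in> C \<Longrightarrow> cs a \<inter> cs b = cs (jn a b)"
  unfolding cs_def' using join_le_iff by auto

lemma cs_join: assumes a: "a \<in> C" and b: "b \<in> C" shows "join_P (Sl P) (cs a) (cs b) = cs (mt a b)"
proof (rule join_Sl_eq)
  show "subl (cs a)" "subl (cs b)" "subl (cs (mt a b))" using a b cs_subl by simp_all
  show "cs a \<subseteq> cs (mt a b)" unfolding cs_def' using le_trans[OF meet_le1[OF a b]] a b by auto
  show "cs b \<subseteq> cs (mt a b)" unfolding cs_def' using le_trans[OF meet_le2[OF a b]] a b by auto
  fix U assume U: "subl U" "cs a \<subseteq> U" "cs b \<subseteq> U"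
  show "cs (mt a b) \<subseteq> U"
  proof
    fix z assume "z \<in> cs (mt a b)"
    hence z: "z \<in> C" "le (mt a b) z" unfolding cs_def' by auto
    have 1: "jn z a \<in> U" "jn z b \<in> U" using U join_ge2 join_in z a b unfolding cs_def' by auto
    have "mt (jn z a) (jn z b) = jn (mt (jn z a) z) (mt (jn z a) b)"
      using meet_join_dist z a b by simp
    moreover have "mt (jn z a) b = jn (mt b z) (mt b a)"
      using meet_comm meet_join_dist z a b by simp
    moreover have "le (mt b z) z" "le (mt b a) z" "le (mt (jn z a) z) z"
      using meet_le2 z a b meet_comm[of b a] by simp_all
    ultimately have "le (mt (jn z a) (jn z b)) z" using join_le_iff z a b by simp
    moreover have "le z (mt (jn z a) (jn z b))" using le_meet_iff join_ge1 z a b by simp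
    ultimately have "z = mt (jn z a) (jn z b)" using le_antisym z a b by simp
    thus "z \<in> U" using subl_meet[OF U(1) 1] by simp
  qed
qed

lemma Inf_Sl_cs: assumes A: "A \<subseteq> C" shows "Inf_P (Sl P) (cs ` A) = cs (Sup_P P A)"
proof -
  have "cs ` A \<subseteq> pcarrier (Sl P)" using A cs_subl by auto
  hence "Inf_P (Sl P) (cs ` A) = C \<inter> \<Inter>(cs ` A)" using Inf_Sl by blast
  also have "\<dots> = cs (Sup_P P A)"
  proof (rule set_eqI)
    fix x
    have "x \<in> C \<Longrightarrow> (\<forall>u\<in>A. le u x) \<longleftrightarrow> le (Sup_P P A) x"
    proof
      assume "x \<in> C" "\<forall>u\<in>A. le u x" thus "le (Sup_P P A) x" using Sup_least[OF A] by blast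
    next
      assume x: "x \<in> C" "le (Sup_P P A) x"
      show "\<forall>u\<in>A. le u x"
      proof
        fix u assume u: "u \<in> A"
        show "le u x" using le_trans[OF Sup_upper[OF A u] x(2)] u A x(1) by auto
      qed
    qed
    thus "x \<in> C \<inter> \<Inter>(cs ` A) \<longleftrightarrow> x \<in> cs (Sup_P P A)"
      unfolding cs_def' by auto
  qed
  finally show ?thesis .
qed

lemma cs_inj: "u \<in> C \<Longrightarrow> v \<in> C \<Longrightarrow> cs u = cs v \<Longrightarrow> u = v"
  unfolding cs_def' using le_antisym by (metis (mono_tags, lifting) le_refl mem_Collect_eq)

lemma criterion: assumes S: "subl S" and x: "x \<in> C" and y: "y \<in> C"
  and h: "\<And>s. s \<in> S \<Longrightarrow> le y s \<Longrightarrow> le x s" shows "S \<subseteq> Dset P x y"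
proof
  fix s assume s: "s \<in> S"
  hence sC: "s \<in> C" using subl_sub S by blast
  have s'S: "imp (imp y s) s \<in> S" using subl_imp[OF S _ s] by simp
  have "le y (imp (imp y s) s)" using imp_adj[of "imp y s" s y] imp_mp'[OF y sC] y sC by simp
  hence "le x (imp (imp y s) s)" using h s'S by simp
  hence "le (mt x (imp y s)) s" using imp_adj[of "imp y s" s x] x sC by simp
  hence "le (mt (imp y s) x) s" by (simp add: meet_comm)
  hence "le (imp y s) (imp x s)" using imp_adj[OF x sC] by simp
  thus "s \<in> Dset P x y" unfolding Dset_def using sC by simp
qed

lemma S_eq_Int_D: assumes S: "subl S" shows "S = C \<inter> \<Inter>((\<lambda>a. Dset P (nu P S a) a) ` C)"
proof
  show "S \<subseteq> C \<inter> \<Inter>((\<lambda>a. Dset P (nu P S a) a) ` C)"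
  proof -
    have "\<And>a. a \<in> C \<Longrightarrow> S \<subseteq> Dset P (nu P S a) a"
      using criterion[OF S] nu_least[OF S] S by simp
    thus ?thesis using subl_sub[OF S] by blast
  qed
  show "C \<inter> \<Inter>((\<lambda>a. Dset P (nu P S a) a) ` C) \<subseteq> S"
  proof
    fix x assume "x \<in> C \<inter> \<Inter>((\<lambda>a. Dset P (nu P S a) a) ` C)"
    hence x: "x \<in> C" and "x \<in> Dset P (nu P S x) x" by auto
    hence "le (imp x x) (imp (nu P S x) x)" unfolding Dset_def by simp
    moreover have "imp x x = tp" using imp_top_iff x by simp
    ultimately have "le (nu P S x) x" using le_imp_top[of "nu P S x" x] x S by simp
    hence "nu P S x = x" using le_antisym nu_ge[OF S x] x S by simp
    thus "x \<in> S" using nu_in[OF S] by metis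
  qed
qed

end


context frm begin

lemma join_mem: assumes S: "subl S" and T: "subl T" and x: "x \<in> join_P (Sl P) S T"
  shows "le (mt (nu P S x) (nu P T x)) x"
proof -
  define W where "W = {x \<in> C. le (mt (nu P S x) (nu P T x)) x}"
  have WS: "S \<subseteq> W"
  proof
    fix x assume x: "x \<in> S"
    hence xC: "x \<in> C" using subl_sub S by blast
    show "x \<in> W" unfolding W_def using nu_fix[OF S x] meet_le1[OF xC, of "nu P T x"] xC T by simp
  qed
  have WT: "T \<subseteq> W"
  proof
    fix x assume x: "x \<in> T"
    hence xC: "x \<in> C" using subl_sub T by blast
    show "x \<in> W" unfolding W_def using nu_fix[OF T x] meet_le2[OF _ xC, of "nu P S x"] xC S by simp
  qed
  have W1: "\<And>A. A \<subseteq> W \<Longrightarrow> Inf_P P A \<in> W"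
  proof -
    fix A assume A: "A \<subseteq> W"
    hence AC: "A \<subseteq> C" unfolding W_def by blast
    let ?m = "Inf_P P A"
    have mC: "?m \<in> C" using AC by simp
    have "le (mt (nu P S ?m) (nu P T ?m)) ?m"
    proof (rule Inf_greatest[OF AC])
      show "mt (nu P S ?m) (nu P T ?m) \<in> C" using S T by simp
      fix a assume a: "a \<in> A"
      hence aC: "a \<in> C" and aW: "le (mt (nu P S a) (nu P T a)) a" using A unfolding W_def by auto
      have ma: "le ?m a" using Inf_lower[OF AC a] .
      have "le ?m (nu P S a)" using le_trans[OF ma nu_ge[OF S aC]] mC aC S by simp
      hence 1: "le (nu P S ?m) (nu P S a)" using nu_least[OF S nu_in[OF S]] by simp
      have "le ?m (nu P T a)" using le_trans[OF ma nu_ge[OF T aC]] mC aC T by simp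
      hence 2: "le (nu P T ?m) (nu P T a)" using nu_least[OF T nu_in[OF T]] by simp
      have "le (mt (nu P S ?m) (nu P T ?m)) (mt (nu P S a) (nu P T a))"
        using meet_mono[OF 1 2] S T by simp
      thus "le (mt (nu P S ?m) (nu P T ?m)) a" using le_trans[OF _ aW] S T aC by simp
    qed
    thus "?m \<in> W" unfolding W_def using mC by simp
  qed
  have W2: "\<And>w x. w \<in> C \<Longrightarrow> x \<in> W \<Longrightarrow> imp w x \<in> W"
  proof -
    fix w x assume w: "w \<in> C" and x: "x \<in> W"
    hence xC: "x \<in> C" and xW: "le (mt (nu P S x) (nu P T x)) x" unfolding W_def by auto
    let ?y = "imp w x" and ?a = "nu P S x" and ?b = "nu P T x"
    have aC: "?a \<in> C" and bC: "?b \<in> C" using S T by simp_all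
    have "le ?y (imp w ?a)" using imp_mono2[OF w xC aC nu_ge[OF S xC]] .
    hence 1: "le (nu P S ?y) (imp w ?a)" using nu_least[OF S subl_imp[OF S w nu_in[OF S]]] by simp
    have "le ?y (imp w ?b)" using imp_mono2[OF w xC bC nu_ge[OF T xC]] .
    hence 2: "le (nu P T ?y) (imp w ?b)" using nu_least[OF T subl_imp[OF T w nu_in[OF T]]] by simp
    have 3: "le (mt (nu P S ?y) (nu P T ?y)) (mt (imp w ?a) (imp w ?b))"
      using meet_mono[OF 1 2] S T by simp
    let ?p = "mt (imp w ?a) (imp w ?b)"
    have pC: "?p \<in> C" by simp
    have "le (mt ?p w) (mt (imp w ?a) w)" using meet_mono[OF meet_le1 le_refl] w by simp
    hence 4: "le (mt ?p w) ?a" using le_trans[OF _ imp_mp[OF w aC]] w aC by simp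
    have "le (mt ?p w) (mt (imp w ?b) w)" using meet_mono[OF meet_le2 le_refl] w by simp
    hence 5: "le (mt ?p w) ?b" using le_trans[OF _ imp_mp[OF w bC]] w bC by simp
    have "le (mt ?p w) (mt ?a ?b)" using le_meet_iff 4 5 aC bC w by simp
    hence "le (mt ?p w) x" using le_trans[OF _ xW] aC bC w xC by simp
    hence "le ?p ?y" using imp_adj[OF w xC] by simp
    hence "le (mt (nu P S ?y) (nu P T ?y)) ?y" using le_trans[OF 3] S T by simp
    thus "?y \<in> W" unfolding W_def by simp
  qed
  have "subl W" unfolding is_sublocale_def using W1 W2 unfolding W_def by blast
  hence "join_P (Sl P) S T \<subseteq> W" using join_Sl_least[OF S T] WS WT by simp
  thus ?thesis using x unfolding W_def by blast
qed

lemma Sl_dist: assumes S: "subl S" and TT: "TT \<subseteq> {T. subl T}"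
  shows "join_P (Sl P) S (Inf_P (Sl P) TT) = Inf_P (Sl P) ((\<lambda>T. join_P (Sl P) S T) ` TT)"
proof -
  let ?I = "C \<inter> \<Inter>TT"
  have I: "subl ?I" using subl_Int TT by blast
  have e1: "Inf_P (Sl P) TT = ?I" using Inf_Sl TT by simp
  have "(\<lambda>T. join_P (Sl P) S T) ` TT \<subseteq> pcarrier (Sl P)" using join_Sl_subl S TT by auto
  hence e2: "Inf_P (Sl P) ((\<lambda>T. join_P (Sl P) S T) ` TT) = C \<inter> \<Inter>((\<lambda>T. join_P (Sl P) S T) ` TT)"
    using Inf_Sl by blast
  let ?J = "join_P (Sl P) S ?I"
  have J: "subl ?J" using join_Sl_subl[OF S I] .
  have "?J = C \<inter> \<Inter>((\<lambda>T. join_P (Sl P) S T) ` TT)"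
  proof
    show "?J \<subseteq> C \<inter> \<Inter>((\<lambda>T. join_P (Sl P) S T) ` TT)"
    proof -
      have "\<And>T. T \<in> TT \<Longrightarrow> ?J \<subseteq> join_P (Sl P) S T"
      proof -
        fix T assume T: "T \<in> TT"
        hence Ts: "subl T" using TT by blast
        have "?I \<subseteq> join_P (Sl P) S T" using join_Sl_ge2[OF S Ts] T by blast
        thus "?J \<subseteq> join_P (Sl P) S T"
          using join_Sl_least[OF S I join_Sl_subl[OF S Ts] join_Sl_ge1[OF S Ts]] by simp
      qed
      thus ?thesis using subl_sub[OF J] by blast
    qed
    show "C \<inter> \<Inter>((\<lambda>T. join_P (Sl P) S T) ` TT) \<subseteq> ?J"
    proof
      fix x assume xx: "x \<in> C \<inter> \<Inter>((\<lambda>T. join_P (Sl P) S T) ` TT)"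
      hence xC: "x \<in> C" by blast
      let ?s = "nu P S x"
      have sC: "?s \<in> C" using S by simp
      have xs: "le x ?s" using nu_ge[OF S xC] .
      have "\<And>T. T \<in> TT \<Longrightarrow> imp ?s x \<in> T"
      proof -
        fix T assume T: "T \<in> TT"
        hence Ts: "subl T" using TT by blast
        have "x \<in> join_P (Sl P) S T" using xx T by blast
        hence 1: "le (mt ?s (nu P T x)) x" using join_mem[OF S Ts] by simp
        have "le x (mt ?s (nu P T x))" using le_meet_iff xs nu_ge[OF Ts xC] xC S Ts by simp
        hence "x = mt ?s (nu P T x)" using le_antisym 1 xC S Ts by simp
        hence "imp ?s x = imp ?s (nu P T x)" using imp_meet_self[OF sC, of "nu P T x"] Ts by simp
        thus "imp ?s x \<in> T" using subl_imp[OF Ts sC nu_in[OF Ts]] by simp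
      qed
      hence "imp ?s x \<in> ?I" by simp
      hence 2: "imp ?s x \<in> ?J" using join_Sl_ge2[OF S I] by blast
      have 3: "?s \<in> ?J" using join_Sl_ge1[OF S I] nu_in[OF S] by blast
      have "mt ?s (imp ?s x) = x" using meet_imp_eq[OF sC xC xs] .
      thus "x \<in> ?J" using subl_meet[OF J 3 2] by simp
    qed
  qed
  thus ?thesis using e1 e2 by simp
qed

lemma Sl_coframe: "is_coframe (Sl P)"
  unfolding is_coframe_def using Sl_clat Sl_dist by simp

lemma cs_closedSl: "closed (Sl P) = cs ` C" by simp

lemma Sl_top_coframe: "top_coframe (Sl P)"
  unfolding top_coframe_def
proof (intro conjI ballI)
  show "is_coframe (Sl P)" by (rule Sl_coframe)
next
  fix X assume "X \<in> closed (Sl P)"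
  then obtain u where u: "u \<in> C" "X = cs u" by auto
  have "opn P u \<in> pcarrier (Sl P)" using opn_subl[OF u(1)] by simp
  moreover have "meet_P (Sl P) X (opn P u) = bot_P (Sl P)"
    using meet_Sl[OF cs_subl[OF u(1)] opn_subl[OF u(1)]] cs_opn_meet[OF u(1)] bot_Sl u by simp
  moreover have "join_P (Sl P) X (opn P u) = top_P (Sl P)"
    using join_cs_opn[OF u(1) u(1)] D_self[OF u(1)] top_Sl u by simp
  ultimately show "complemented (Sl P) X" unfolding complemented_def using cs_subl u by auto
next
  have "bot_P (Sl P) = cs tp" unfolding bot_Sl cs_def' using le_antisym top_greatest by auto
  thus "bot_P (Sl P) \<in> closed (Sl P)" by simp
next
  have "top_P (Sl P) = cs bt" unfolding top_Sl cs_def' using bot_least by auto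
  thus "top_P (Sl P) \<in> closed (Sl P)" by simp
next
  fix X Y assume "X \<in> closed (Sl P)" "Y \<in> closed (Sl P)"
  then obtain a b where ab: "a \<in> C" "b \<in> C" "X = cs a" "Y = cs b" by auto
  show "meet_P (Sl P) X Y \<in> closed (Sl P)"
    using meet_Sl[OF cs_subl cs_subl] ab cs_meet by simp
  show "join_P (Sl P) X Y \<in> closed (Sl P)"
    using cs_join ab by simp
qed

lemma closed_Sl_sub: "T \<subseteq> closed (Sl P) \<Longrightarrow> \<exists>A. A \<subseteq> C \<and> T = cs ` A"
  by (simp add: subset_image_iff)

lemma Sl_strong: "strong_top_coframe (Sl P)"
  unfolding strong_top_coframe_def
proof (intro conjI allI impI)
  show "top_coframe (Sl P)" by (rule Sl_top_coframe)
  fix T assume "T \<subseteq> closed (Sl P)"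
  then obtain A where A: "A \<subseteq> C" "T = cs ` A" using closed_Sl_sub by blast
  show "Inf_P (Sl P) T \<in> closed (Sl P)" using Inf_Sl_cs[OF A(1)] A by simp
qed

lemma meetC_Sl: "meetC (Sl P) = cs ` C"
proof
  show "meetC (Sl P) \<subseteq> cs ` C"
    unfolding meetC_def using Sl_strong unfolding strong_top_coframe_def by auto
  show "cs ` C \<subseteq> meetC (Sl P)"
  proof
    fix X assume "X \<in> cs ` C"
    then obtain u where u: "u \<in> C" "X = cs u" by auto
    have "Inf_P (Sl P) {cs u} = cs u" using Inf_Sl[of "{cs u}"] cs_subl[OF u(1)] subl_sub by auto
    moreover have "{cs u} \<in> Pow (closed (Sl P))" using u by simp
    ultimately show "X \<in> meetC (Sl P)" unfolding meetC_def using u by (metis image_eqI)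
  qed
qed

end


context frm begin

lemma cs_Sup: assumes A: "A \<subseteq> C" shows "C \<inter> \<Inter>(cs ` A) = cs (Sup_P P A)"
proof -
  have "cs ` A \<subseteq> pcarrier (Sl P)" using A cs_subl by auto
  hence "Inf_P (Sl P) (cs ` A) = C \<inter> \<Inter>(cs ` A)" using Inf_Sl by blast
  thus ?thesis using Inf_Sl_cs[OF A] by simp
qed

lemma meetC_op_Sl: "meetC_op (Sl P) = \<lparr>pcarrier = cs ` C, ple = (\<lambda>x y. y \<subseteq> x)\<rparr>"
  unfolding meetC_op_def meetC_Sl by simp

lemma M_poset: "is_poset (meetC_op (Sl P))"
  unfolding meetC_op_Sl is_poset_def by auto

lemma cs_le_iff: "u \<in> C \<Longrightarrow> v \<in> C \<Longrightarrow> cs u \<subseteq> cs v \<longleftrightarrow> le v u"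
  unfolding cs_def' using le_trans[of v u] by auto

lemma cs_frame_hom: "frame_hom P (meetC_op (Sl P)) cs"
  unfolding frame_hom_def
proof (intro conjI allI impI ballI)
  show "cs ` C \<subseteq> pcarrier (meetC_op (Sl P))" unfolding meetC_op_Sl by simp
next
  fix S assume S: "S \<subseteq> C"
  have "is_lub (meetC_op (Sl P)) (cs ` S) (cs (Sup_P P S))"
    unfolding is_lub_def meetC_op_Sl
  proof (simp, intro conjI ballI impI)
    show "cs (Sup_P P S) \<in> cs ` C" using S by simp
    fix s assume s: "s \<in> S"
    hence "s \<in> C" using S by blast
    thus "cs (Sup_P P S) \<subseteq> cs s" using cs_le_iff[of "Sup_P P S" s] Sup_upper[OF S s] S by simp
  next
    fix y assume y: "y \<in> C" "\<forall>s\<in>S. cs y \<subseteq> cs s"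
    have "cs y \<subseteq> C \<inter> \<Inter>(cs ` S)" using y unfolding cs_def' by auto
    thus "cs y \<subseteq> cs (Sup_P P S)" using cs_Sup[OF S] by simp
  qed
  thus "cs (Sup_P P S) = Sup_P (meetC_op (Sl P)) (cs ` S)" using Sup_P_eq[OF M_poset] by simp
next
  fix a b assume a: "a \<in> C" and b: "b \<in> C"
  have "is_glb (meetC_op (Sl P)) {cs a, cs b} (cs (mt a b))"
    unfolding is_glb_def meetC_op_Sl
  proof (simp, intro conjI ballI impI)
    show "cs (mt a b) \<in> cs ` C" using a b by simp
    show "cs a \<subseteq> cs (mt a b)" "cs b \<subseteq> cs (mt a b)" using cs_le_iff a b meet_le1 meet_le2 by auto
  next
    fix y assume y: "y \<in> C" "cs a \<subseteq> cs y \<and> cs b \<subseteq> cs y"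
    hence "le y a" "le y b" using cs_le_iff a b by auto
    hence "le y (mt a b)" using le_meet_iff a b y by simp
    thus "cs (mt a b) \<subseteq> cs y" using cs_le_iff a b y by simp
  qed
  thus "cs (mt a b) = meet_P (meetC_op (Sl P)) (cs a) (cs b)"
    unfolding meet_P_def using Inf_P_eq[OF M_poset] by simp
next
  have "is_glb (meetC_op (Sl P)) {} (cs tp)"
    unfolding is_glb_def meetC_op_Sl using cs_le_iff top_greatest by auto
  thus "cs tp = top_P (meetC_op (Sl P))"
    unfolding top_P_def using Inf_P_eq[OF M_poset] by simp
qed

lemma cs_bij: "bij_betw cs C (meetC (Sl P))"
  unfolding bij_betw_def meetC_Sl inj_on_def using cs_inj by blast

end


locale univ = frm P for P :: "('a, 'z) pos_scheme" +
  fixes L :: "'b tcof" and f :: "'a \<Rightarrow> 'b"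
  assumes Lstrong: "strong_top_coframe L" and fh: "frame_hom P (meetC_op L) f"
begin

lemma L_top: "top_coframe L" using Lstrong unfolding strong_top_coframe_def by simp
lemma L_coframe: "is_coframe L" using L_top unfolding top_coframe_def by simp
lemma L_clat: "complete_lat L" using L_coframe unfolding is_coframe_def by simp

end

sublocale univ \<subseteq> L: clat L unfolding clat_def by (rule L_clat)

context univ begin

abbreviation Lle where "Lle \<equiv> ple L"
abbreviation LC where "LC \<equiv> pcarrier L"
abbreviation Lm where "Lm \<equiv> meet_P L"
abbreviation Lj where "Lj \<equiv> join_P L"
abbreviation Ltop where "Ltop \<equiv> top_P L"
abbreviation Lbot where "Lbot \<equiv> bot_P L"

lemma Ldist: "a \<in> LC \<Longrightarrow> S \<subseteq> LC \<Longrightarrow> Lj a (Inf_P L S) = Inf_P L ((\<lambda>s. Lj a s) ` S)"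
  using L_coframe unfolding is_coframe_def by blast

lemma Ldist2: "a \<in> LC \<Longrightarrow> b \<in> LC \<Longrightarrow> c \<in> LC \<Longrightarrow> Lj a (Lm b c) = Lm (Lj a b) (Lj a c)"
  unfolding meet_P_def using Ldist[of a "{b,c}"] by simp

lemma closed_compl: "x \<in> closed L \<Longrightarrow> complemented L x"
  using L_top unfolding top_coframe_def by blast
lemma closed_sub: "closed L \<subseteq> LC"
  using closed_compl unfolding complemented_def by blast
lemma closed_Inf: "T \<subseteq> closed L \<Longrightarrow> Inf_P L T \<in> closed L"
  using Lstrong unfolding strong_top_coframe_def by blast
lemma closed_join: "x \<in> closed L \<Longrightarrow> y \<in> closed L \<Longrightarrow> Lj x y \<in> closed L"
  using L_top unfolding top_coframe_def by blast
lemma closed_bot: "Lbot \<in> closed L"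
  using L_top unfolding top_coframe_def by blast

lemma meetC_L: "meetC L = closed L"
proof
  show "meetC L \<subseteq> closed L" unfolding meetC_def using closed_Inf by auto
  show "closed L \<subseteq> meetC L"
  proof
    fix x assume x: "x \<in> closed L"
    hence "x \<in> LC" using closed_sub by blast
    hence "Inf_P L {x} = x" by (intro L.Inf_eq) (simp add: is_glb_def)
    thus "x \<in> meetC L" unfolding meetC_def using x by (metis Pow_iff empty_subsetI image_eqI insert_subset)
  qed
qed

lemma Mop_eq: "meetC_op L = \<lparr>pcarrier = closed L, ple = (\<lambda>x y. Lle y x)\<rparr>"
  unfolding meetC_op_def meetC_L by simp

lemma Mop_poset: "is_poset (meetC_op L)"
proof -
  have "\<forall>x\<in>closed L. \<forall>y\<in>closed L. \<forall>z\<in>closed L. Lle y x \<and> Lle z y \<longrightarrow> Lle z x"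
  proof (intro ballI impI)
    fix x y z assume "x \<in> closed L" "y \<in> closed L" "z \<in> closed L" "Lle y x \<and> Lle z y"
    thus "Lle z x" using L.le_trans[of z y x] closed_sub by blast
  qed
  moreover have "\<forall>x\<in>closed L. \<forall>y\<in>closed L. Lle y x \<and> Lle x y \<longrightarrow> x = y"
  proof (intro ballI impI)
    fix x y assume "x \<in> closed L" "y \<in> closed L" "Lle y x \<and> Lle x y"
    thus "x = y" using L.le_antisym[of x y] closed_sub by blast
  qed
  moreover have "\<forall>x\<in>closed L. Lle x x"
  proof
    fix x assume "x \<in> closed L" thus "Lle x x" using closed_sub by auto
  qed
  ultimately show ?thesis unfolding Mop_eq is_poset_def pos.select_convs by (intro conjI)
qed

definition comp :: "'b \<Rightarrow> 'b" where
  "comp x = (SOME y. y \<in> LC \<and> Lm x y = Lbot \<and> Lj x y = Ltop)"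

lemma comp: assumes "x \<in> closed L" shows "comp x \<in> LC" "Lm x (comp x) = Lbot" "Lj x (comp x) = Ltop"
proof -
  have "\<exists>y. y \<in> LC \<and> Lm x y = Lbot \<and> Lj x y = Ltop" using closed_compl[OF assms] unfolding complemented_def by blast
  hence "comp x \<in> LC \<and> Lm x (comp x) = Lbot \<and> Lj x (comp x) = Ltop" unfolding comp_def by (rule someI_ex)
  thus "comp x \<in> LC" "Lm x (comp x) = Lbot" "Lj x (comp x) = Ltop" by auto
qed

lemma compl_le: assumes x: "x \<in> LC" and y: "y \<in> LC" and y': "y' \<in> LC"
  and h1: "Lm x y' = Lbot" and h2: "Lj x y = Ltop" shows "Lle y' y"
proof -
  have "y = Lj y Lbot" using L.join_bot y by simp
  also have "\<dots> = Lj y (Lm x y')" using h1 by simp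
  also have "\<dots> = Lm (Lj y x) (Lj y y')" using Ldist2 x y y' by simp
  also have "Lj y x = Ltop" using h2 L.join_comm by metis
  also have "Lm Ltop (Lj y y') = Lj y y'" using L.meet_top y y' by simp
  finally have "y = Lj y y'" .
  thus ?thesis using L.join_ge2[OF y y'] by simp
qed

lemma compl_unique: assumes x: "x \<in> LC" and y: "y \<in> LC" and y': "y' \<in> LC"
  and "Lm x y = Lbot" "Lj x y = Ltop" "Lm x y' = Lbot" "Lj x y' = Ltop" shows "y = y'"
  using compl_le[OF x y y'] compl_le[OF x y' y] assms L.le_antisym[OF y y'] by simp

lemma law1: assumes c: "c \<in> closed L" and x: "x \<in> LC" and y: "y \<in> LC"
  and h: "Lle (Lm x c) y" shows "Lle x (Lj y (comp c))"
proof -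
  have cC: "c \<in> LC" using c closed_sub by blast
  note cc = comp[OF c]
  have "Lj (comp c) (Lm x c) = Lm (Lj (comp c) x) (Lj (comp c) c)" using Ldist2 cc cC x by simp
  also have "Lj (comp c) c = Ltop" using cc L.join_comm by metis
  also have "Lm (Lj (comp c) x) Ltop = Lj (comp c) x" using L.meet_top L.meet_comm cc x by (metis L.join_in)
  finally have e: "Lj (comp c) (Lm x c) = Lj (comp c) x" .
  have "Lle x (Lj (comp c) x)" using L.join_ge2 cc x by simp
  also have "Lle (Lj (comp c) (Lm x c)) (Lj (comp c) y)"
    using L.join_mono[of "comp c" "comp c" "Lm x c" y] h cc x y cC by simp
  hence "Lle (Lj (comp c) x) (Lj (comp c) y)" using e by simp
  ultimately have "Lle x (Lj (comp c) y)" using L.le_trans cc x y by simp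
  thus ?thesis using L.join_comm by metis
qed

lemma law2: assumes c: "c \<in> closed L" and x: "x \<in> LC" and y: "y \<in> LC"
  and h: "Lle x (Lj y (comp c))" shows "Lle (Lm x c) y"
proof -
  have cC: "c \<in> LC" using c closed_sub by blast
  note cc = comp[OF c]
  have 1: "Lle (Lm x c) (Lm (Lj y (comp c)) (Lj y c))"
    using L.meet_mono[OF h L.join_ge2[OF y cC]] cc cC x y by simp
  have "Lm (Lj y (comp c)) (Lj y c) = Lj y (Lm (comp c) c)" using Ldist2 cc cC y by simp
  also have "Lm (comp c) c = Lbot" using cc L.meet_comm by metis
  also have "Lj y Lbot = y" using L.join_bot y by simp
  finally show ?thesis using 1 by simp
qed

end


context univ begin

lemma f_closed: "u \<in> C \<Longrightarrow> f u \<in> closed L"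
  using fh unfolding frame_hom_def Mop_eq by auto
lemma f_in[simp]: "u \<in> C \<Longrightarrow> f u \<in> LC"
  using f_closed closed_sub by blast

lemma f_Sup: assumes S: "S \<subseteq> C" shows "f (Sup_P P S) = Inf_P L (f ` S)"
proof -
  have fS: "f ` S \<subseteq> closed L" using f_closed S by blast
  hence fS': "f ` S \<subseteq> LC" using closed_sub by blast
  have "is_lub (meetC_op L) (f ` S) (Inf_P L (f ` S))"
    unfolding is_lub_def Mop_eq pos.select_convs
  proof (intro conjI ballI impI)
    show "Inf_P L (f ` S) \<in> closed L" using closed_Inf[OF fS] .
    fix s assume "s \<in> f ` S" thus "Lle (Inf_P L (f ` S)) s" using L.Inf_lower[OF fS'] by simp
  next
    fix y assume "y \<in> closed L" "\<forall>s\<in>f ` S. Lle y s"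
    thus "Lle y (Inf_P L (f ` S))" using L.Inf_greatest[OF fS'] closed_sub by blast
  qed
  hence "Sup_P (meetC_op L) (f ` S) = Inf_P L (f ` S)" using Sup_P_eq[OF Mop_poset] by simp
  moreover have "f (Sup_P P S) = Sup_P (meetC_op L) (f ` S)" using fh S unfolding frame_hom_def by blast
  ultimately show ?thesis by simp
qed

lemma f_meet: assumes a: "a \<in> C" and b: "b \<in> C" shows "f (mt a b) = Lj (f a) (f b)"
proof -
  have fa: "f a \<in> closed L" "f a \<in> LC" and fb: "f b \<in> closed L" "f b \<in> LC" using a b f_closed by auto
  have "is_glb (meetC_op L) {f a, f b} (Lj (f a) (f b))"
    unfolding is_glb_def Mop_eq pos.select_convs
  proof (intro conjI ballI impI)
    show "Lj (f a) (f b) \<in> closed L" using closed_join fa fb by simp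
    fix s assume "s \<in> {f a, f b}" thus "Lle s (Lj (f a) (f b))" using L.join_ge1 L.join_ge2 fa fb by auto
  next
    fix y assume "y \<in> closed L" "\<forall>s\<in>{f a, f b}. Lle s y"
    thus "Lle (Lj (f a) (f b)) y" using L.join_le_iff fa fb closed_sub by blast
  qed
  hence "meet_P (meetC_op L) (f a) (f b) = Lj (f a) (f b)" unfolding meet_P_def using Inf_P_eq[OF Mop_poset] by simp
  moreover have "f (mt a b) = meet_P (meetC_op L) (f a) (f b)" using fh a b unfolding frame_hom_def by blast
  ultimately show ?thesis by simp
qed

lemma f_top: "f tp = Lbot"
proof -
  have "is_glb (meetC_op L) {} Lbot"
    unfolding is_glb_def Mop_eq pos.select_convs using closed_bot closed_sub L.bot_least by auto
  hence "top_P (meetC_op L) = Lbot" unfolding top_P_def using Inf_P_eq[OF Mop_poset] by simp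
  moreover have "f tp = top_P (meetC_op L)" using fh unfolding frame_hom_def by blast
  ultimately show ?thesis by simp
qed

lemma f_bot: "f bt = Ltop"
  unfolding bot_P_def top_P_def using f_Sup[of "{}"] by simp

lemma f_join: assumes a: "a \<in> C" and b: "b \<in> C" shows "f (jn a b) = Lm (f a) (f b)"
  unfolding join_P_def meet_P_def using f_Sup[of "{a,b}"] a b by simp

lemma f_anti: assumes a: "a \<in> C" and b: "b \<in> C" and ab: "le a b" shows "Lle (f b) (f a)"
proof -
  have "jn a b = b" using join_eq_right[OF ab a b] .
  hence "f b = Lm (f a) (f b)" using f_join[OF a b] by simp
  thus ?thesis using L.meet_le1[of "f a" "f b"] a b by simp
qed

definition phi :: "'b \<Rightarrow> 'a" where "phi m = Sup_P P {u \<in> C. Lle m (f u)}"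

lemma phi_in[simp]: "phi m \<in> C" unfolding phi_def by (rule Sup_in) auto

lemma phi_f: assumes m: "m \<in> LC" shows "Lle m (f (phi m))"
proof -
  let ?U = "{u \<in> C. Lle m (f u)}"
  have U: "?U \<subseteq> C" by auto
  have "f (phi m) = Inf_P L (f ` ?U)" unfolding phi_def using f_Sup[OF U] .
  moreover have "Lle m (Inf_P L (f ` ?U))"
  proof (rule L.Inf_greatest)
    show "f ` ?U \<subseteq> LC" by auto
    show "m \<in> LC" by fact
    fix s assume "s \<in> f ` ?U" thus "Lle m s" by blast
  qed
  ultimately show ?thesis by simp
qed

lemma galois: assumes m: "m \<in> LC" and u: "u \<in> C" shows "Lle m (f u) \<longleftrightarrow> le u (phi m)"
proof
  assume "Lle m (f u)" thus "le u (phi m)" unfolding phi_def using u by (intro Sup_upper) auto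
next
  assume "le u (phi m)"
  hence "Lle (f (phi m)) (f u)" using f_anti u by simp
  thus "Lle m (f u)" using L.le_trans[OF phi_f[OF m]] m u by simp
qed

end


context univ begin

definition trm :: "'a set \<Rightarrow> 'a \<Rightarrow> 'b" where "trm S a = Lj (f (nu P S a)) (comp (f a))"
definition g :: "'a set \<Rightarrow> 'b" where "g S = Inf_P L ((\<lambda>a. trm S a) ` C)"

lemma comp_f_in[simp]: "a \<in> C \<Longrightarrow> comp (f a) \<in> LC" using comp(1)[OF f_closed] by simp

lemma trm_in[simp]: "subl S \<Longrightarrow> a \<in> C \<Longrightarrow> trm S a \<in> LC"
  unfolding trm_def by simp
lemma trm_set: "subl S \<Longrightarrow> (\<lambda>a. trm S a) ` C \<subseteq> LC" by auto
lemma g_in[simp]: "subl S \<Longrightarrow> g S \<in> LC" unfolding g_def using trm_set by simp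
lemma g_le_trm: "subl S \<Longrightarrow> a \<in> C \<Longrightarrow> Lle (g S) (trm S a)"
  unfolding g_def using L.Inf_lower[OF trm_set] by simp

lemma le_g: assumes S: "subl S" and m: "m \<in> LC"
  and h: "\<And>a. a \<in> C \<Longrightarrow> Lle (Lm m (f a)) (f (nu P S a))" shows "Lle m (g S)"
  unfolding g_def
proof (rule L.Inf_greatest[OF trm_set[OF S] m])
  fix s assume "s \<in> (\<lambda>a. trm S a) ` C"
  then obtain a where a: "a \<in> C" "s = trm S a" by blast
  show "Lle m s" unfolding a trm_def using law1[OF f_closed[OF a(1)] m _ h[OF a(1)]] S by simp
qed

lemma g_elim: assumes S: "subl S" and m: "m \<in> LC" and mg: "Lle m (g S)" and a: "a \<in> C"
  shows "Lle (Lm m (f a)) (f (nu P S a))"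
proof -
  have "Lle m (trm S a)" using L.le_trans[OF mg g_le_trm[OF S a]] m S a by simp
  thus ?thesis unfolding trm_def using law2[OF f_closed[OF a] m] S by simp
qed

lemma g_mono: assumes S: "subl S" and T: "subl T" and ST: "S \<subseteq> T" shows "Lle (g S) (g T)"
proof (rule le_g[OF T g_in[OF S]])
  fix a assume a: "a \<in> C"
  have 1: "Lle (Lm (g S) (f a)) (f (nu P S a))" using g_elim[OF S g_in[OF S] L.le_refl a] S by simp
  have "le (nu P T a) (nu P S a)" using nu_least[OF T _ nu_ge[OF S a]] nu_in[OF S] ST by blast
  hence "Lle (f (nu P S a)) (f (nu P T a))" using f_anti S T by simp
  thus "Lle (Lm (g S) (f a)) (f (nu P T a))" using L.le_trans[OF 1] S T a by simp
qed

lemma g_Inf: assumes SS: "SS \<subseteq> {S. subl S}" shows "g (C \<inter> \<Inter>SS) = Inf_P L (g ` SS)"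
proof -
  let ?I = "C \<inter> \<Inter>SS"
  have I: "subl ?I" using subl_Int SS by blast
  have gSS: "g ` SS \<subseteq> LC" using SS by auto
  let ?m = "Inf_P L (g ` SS)"
  have m: "?m \<in> LC" using gSS by simp
  have 1: "Lle (g ?I) ?m"
  proof (rule L.Inf_greatest[OF gSS g_in[OF I]])
    fix s assume "s \<in> g ` SS"
    then obtain S where S: "S \<in> SS" "s = g S" by blast
    have "subl S" using S SS by blast
    thus "Lle (g ?I) s" using g_mono[OF I] S by blast
  qed
  have 2: "Lle ?m (g ?I)"
  proof (rule le_g[OF I m])
    fix a assume a: "a \<in> C"
    let ?n = "Lm ?m (f a)"
    have n: "?n \<in> LC" using m a by simp
    let ?k = "phi ?n"
    have nk: "Lle ?n (f ?k)" using phi_f[OF n] .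
    have "\<And>S. S \<in> SS \<Longrightarrow> ?k \<in> S"
    proof -
      fix S assume SSS: "S \<in> SS"
      hence S: "subl S" using SS by blast
      have "Lle ?m (g S)" using L.Inf_lower[OF gSS] SSS by simp
      hence 3: "Lle (Lm ?m (f ?k)) (f (nu P S ?k))" using g_elim[OF S m] by simp
      have "Lle ?n (Lm ?m (f ?k))" using L.le_meet_iff[of ?m "f ?k" ?n] L.meet_le1[of ?m "f a"] nk m a by simp
      hence "Lle ?n (f (nu P S ?k))" using L.le_trans[OF _ 3] m a S by simp
      hence "le (nu P S ?k) ?k" using galois[OF n] S by simp
      hence "nu P S ?k = ?k" using le_antisym nu_ge[OF S] S by simp
      thus "?k \<in> S" using nu_in[OF S] by metis
    qed
    hence kI: "?k \<in> ?I" by simp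
    have "Lle ?n (f a)" using L.meet_le2 m a by simp
    hence "le a ?k" using galois[OF n a] by simp
    hence "le (nu P ?I a) ?k" using nu_least[OF I kI] by simp
    hence "Lle (f ?k) (f (nu P ?I a))" using f_anti I by simp
    thus "Lle ?n (f (nu P ?I a))" using L.le_trans[OF nk] n I by simp
  qed
  show ?thesis using L.le_antisym[OF g_in[OF I] m 1 2] .
qed

end


context frm begin
lemma D_prop: assumes x: "x \<in> C" and y: "y \<in> C" and z: "z \<in> Dset P x y" and yz: "le y z"
  shows "le x z"
proof -
  have zC: "z \<in> C" and zD: "le (imp y z) (imp x z)" using z unfolding Dset_def by auto
  have "imp y z = tp" using imp_top_iff[OF y zC] yz by simp
  thus ?thesis using zD le_imp_top[OF x zC] by simp
qed
end

context univ begin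

lemma g_join_core: assumes S: "subl S" and T: "subl T" and a: "a \<in> C" and b: "b \<in> C"
  shows "Lle (g (join_P (Sl P) S T)) (Lj (trm T b) (trm S a))"
proof -
  let ?J = "join_P (Sl P) S T"
  have J: "subl ?J" using join_Sl_subl[OF S T] .
  let ?G = "g ?J" and ?p = "nu P S a" and ?q = "nu P T b"
  have G: "?G \<in> LC" using J by simp
  have pC: "?p \<in> C" and qC: "?q \<in> C" using S T by simp_all
  have pq: "mt ?p ?q \<in> C" using pC qC by simp
  have ab: "jn a b \<in> C" using a b by simp
  have DS: "S \<subseteq> Dset P (mt ?p ?q) (jn a b)"
  proof (rule criterion[OF S pq ab])
    fix s assume s: "s \<in> S" "le (jn a b) s"
    have sC: "s \<in> C" using s subl_sub S by blast
    have "le a s" using join_le_iff[OF a b sC] s by simp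
    hence "le ?p s" using nu_least[OF S s(1)] by simp
    thus "le (mt ?p ?q) s" using le_trans[OF meet_le1[OF pC qC]] pC qC sC by simp
  qed
  have DT: "T \<subseteq> Dset P (mt ?p ?q) (jn a b)"
  proof (rule criterion[OF T pq ab])
    fix s assume s: "s \<in> T" "le (jn a b) s"
    have sC: "s \<in> C" using s subl_sub T by blast
    have "le b s" using join_le_iff[OF a b sC] s by simp
    hence "le ?q s" using nu_least[OF T s(1)] by simp
    thus "le (mt ?p ?q) s" using le_trans[OF meet_le2[OF pC qC]] pC qC sC by simp
  qed
  have "?J \<subseteq> Dset P (mt ?p ?q) (jn a b)"
    using join_Sl_least[OF S T Dset_subl[OF pq ab] DS DT] .
  hence "nu P ?J (jn a b) \<in> Dset P (mt ?p ?q) (jn a b)" using nu_in[OF J] by blast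
  hence "le (mt ?p ?q) (nu P ?J (jn a b))" using D_prop[OF pq ab] nu_ge[OF J ab] by simp
  hence "Lle (f (nu P ?J (jn a b))) (f (mt ?p ?q))" using f_anti J pq by simp
  hence 1: "Lle (f (nu P ?J (jn a b))) (Lj (f ?p) (f ?q))" using f_meet[OF pC qC] by simp
  let ?Z = "Lj (f ?p) (f ?q)"
  have Z: "?Z \<in> LC" using pC qC by simp
  have 2: "Lle (Lm ?G (f (jn a b))) (f (nu P ?J (jn a b)))" using g_elim[OF J G L.le_refl[OF G] ab] .
  have 3: "Lle (Lm (Lm ?G (f a)) (f b)) (Lm ?G (f (jn a b)))"
  proof -
    let ?x = "Lm (Lm ?G (f a)) (f b)"
    have fa: "f a \<in> LC" and fb: "f b \<in> LC" using a b by simp_all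
    have x: "?x \<in> LC" using G fa fb by simp
    have i: "Lle ?x (Lm ?G (f a))" using L.meet_le1 G fa fb by simp
    have i1: "Lle ?x ?G" using L.le_trans[OF i L.meet_le1[OF G fa]] x G fa by simp
    have i2: "Lle ?x (f a)" using L.le_trans[OF i L.meet_le2[OF G fa]] x G fa by simp
    have i3: "Lle ?x (f b)" using L.meet_le2 G fa fb by simp
    show ?thesis unfolding f_join[OF a b] using L.le_meet_iff i1 i2 i3 G fa fb x by simp
  qed
  have 4: "Lle (Lm (Lm ?G (f a)) (f b)) ?Z"
    using L.le_trans[OF 3 L.le_trans[OF 2 1]] G a b J ab Z by simp
  have 5: "Lle (Lm ?G (f a)) (Lj ?Z (comp (f b)))" using law1[OF f_closed[OF b] _ Z 4] G a by simp
  have 6: "Lle ?G (Lj (Lj ?Z (comp (f b))) (comp (f a)))" using law1[OF f_closed[OF a] G _ 5] Z b by simp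
  have tS: "trm S a \<in> LC" and tT: "trm T b \<in> LC" using S T a b by simp_all
  have R: "Lj (trm T b) (trm S a) \<in> LC" using tS tT by simp
  have fp: "Lle (f ?p) (Lj (trm T b) (trm S a))"
    using L.le_trans[OF L.join_ge1 L.join_ge2, of "f ?p" "comp (f a)" "trm T b"] pC a tT tS
    unfolding trm_def by simp
  have ca: "Lle (comp (f a)) (Lj (trm T b) (trm S a))"
    using L.le_trans[OF L.join_ge2 L.join_ge2, of "f ?p" "comp (f a)" "trm T b"] pC a tT tS
    unfolding trm_def by simp
  have fq: "Lle (f ?q) (Lj (trm T b) (trm S a))"
    using L.le_trans[OF L.join_ge1 L.join_ge1, of "f ?q" "comp (f b)" "trm S a"] qC b tT tS
    unfolding trm_def by simp
  have cb: "Lle (comp (f b)) (Lj (trm T b) (trm S a))"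
    using L.le_trans[OF L.join_ge2 L.join_ge1, of "f ?q" "comp (f b)" "trm S a"] qC b tT tS
    unfolding trm_def by simp
  have 7: "Lle (Lj (Lj ?Z (comp (f b))) (comp (f a))) (Lj (trm T b) (trm S a))"
    using L.join_le_iff fp fq ca cb pC qC a b R by simp
  show ?thesis using L.le_trans[OF 6 7] G R Z a b by simp
qed

end


context univ begin

lemma g_join: assumes S: "subl S" and T: "subl T"
  shows "g (join_P (Sl P) S T) = Lj (g S) (g T)"
proof -
  let ?J = "join_P (Sl P) S T"
  have J: "subl ?J" using join_Sl_subl[OF S T] .
  have gS: "g S \<in> LC" and gT: "g T \<in> LC" and G: "g ?J \<in> LC" using S T J by simp_all
  have 1: "Lle (Lj (g S) (g T)) (g ?J)"
    using L.join_le_iff[OF gS gT G] g_mono[OF S J join_Sl_ge1[OF S T]] g_mono[OF T J join_Sl_ge2[OF S T]] by simp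
  have XS: "(\<lambda>a. trm S a) ` C \<subseteq> LC" and YT: "(\<lambda>a. trm T a) ` C \<subseteq> LC" using trm_set S T by simp_all
  have e1: "Lj (g S) (g T) = Inf_P L ((\<lambda>y. Lj (g S) y) ` ((\<lambda>a. trm T a) ` C))"
    unfolding g_def[of T] using Ldist[OF gS YT] .
  have 2: "Lle (g ?J) (Lj (g S) (g T))"
    unfolding e1
  proof (rule L.Inf_greatest)
    show "(\<lambda>y. Lj (g S) y) ` ((\<lambda>a. trm T a) ` C) \<subseteq> LC" using gS YT by auto
    show "g ?J \<in> LC" by fact
    fix z assume "z \<in> (\<lambda>y. Lj (g S) y) ` ((\<lambda>a. trm T a) ` C)"
    then obtain b where b: "b \<in> C" "z = Lj (g S) (trm T b)" by blast
    have tb: "trm T b \<in> LC" using T b by simp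
    have "z = Lj (trm T b) (g S)" using b L.join_comm by metis
    also have "\<dots> = Inf_P L ((\<lambda>x. Lj (trm T b) x) ` ((\<lambda>a. trm S a) ` C))"
      unfolding g_def[of S] using Ldist[OF tb XS] .
    finally have e2: "z = Inf_P L ((\<lambda>x. Lj (trm T b) x) ` ((\<lambda>a. trm S a) ` C))" .
    show "Lle (g ?J) z" unfolding e2
    proof (rule L.Inf_greatest)
      show "(\<lambda>x. Lj (trm T b) x) ` ((\<lambda>a. trm S a) ` C) \<subseteq> LC" using tb XS by auto
      show "g ?J \<in> LC" by fact
      fix w assume "w \<in> (\<lambda>x. Lj (trm T b) x) ` ((\<lambda>a. trm S a) ` C)"
      then obtain a where a: "a \<in> C" "w = Lj (trm T b) (trm S a)" by blast
      show "Lle (g ?J) w" using g_join_core[OF S T a(1) b(1)] a by simp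
    qed
  qed
  show ?thesis using L.le_antisym[OF G _ 2 1] gS gT by simp
qed

lemma comp_top: "comp Ltop = Lbot"
proof -
  have t: "Ltop \<in> closed L" using f_bot f_closed[OF bot_in] by simp
  show ?thesis using compl_unique[of Ltop "comp Ltop" Lbot] comp[OF t]
      L.meet_comm[of Ltop Lbot] L.meet_top[of Lbot] L.join_bot[of Ltop] by simp
qed

lemma g_bot: "g {tp} = Lbot"
proof -
  have s: "subl {tp}" by (rule subl_single_top)
  have "nu P {tp} bt = tp" using nu_in[OF s] by simp
  hence "trm {tp} bt = Lbot" unfolding trm_def using f_top f_bot comp_top L.join_bot[of Lbot] by simp
  hence "Lle (g {tp}) Lbot" using g_le_trm[OF s bot_in] by simp
  thus ?thesis using L.le_antisym L.bot_least g_in[OF s] by simp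
qed

lemma g_cs: assumes u: "u \<in> C" shows "g (cs u) = f u"
proof -
  have s: "subl (cs u)" using cs_subl[OF u] .
  have uu: "u \<in> cs u" unfolding cs_def' using u by simp
  have "le (nu P (cs u) bt) u" using nu_least[OF s uu] bot_least u by simp
  moreover have "le u (nu P (cs u) bt)" using nu_in[OF s] unfolding cs_def' by simp
  ultimately have "nu P (cs u) bt = u" using le_antisym u s by simp
  hence "trm (cs u) bt = f u" unfolding trm_def using f_bot comp_top L.join_bot[of "f u"] u by simp
  hence 1: "Lle (g (cs u)) (f u)" using g_le_trm[OF s bot_in] by simp
  have 2: "Lle (f u) (g (cs u))"
  proof (rule le_g[OF s])
    show "f u \<in> LC" using u by simp
    fix a assume a: "a \<in> C"
    have "jn u a \<in> cs u" unfolding cs_def' using join_ge1 u a by simp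
    hence "le (nu P (cs u) a) (jn u a)" using nu_least[OF s] join_ge2 u a by simp
    hence "Lle (f (jn u a)) (f (nu P (cs u) a))" using f_anti s u a by simp
    thus "Lle (Lm (f u) (f a)) (f (nu P (cs u) a))" using f_join u a by simp
  qed
  show ?thesis using L.le_antisym 1 2 u s by simp
qed

lemma g_hom: "top_coframe_hom (Sl P) L g"
  unfolding top_coframe_hom_def coframe_hom_def
proof (intro conjI allI impI ballI)
  show "g ` pcarrier (Sl P) \<subseteq> LC" by auto
next
  fix SS assume SS: "SS \<subseteq> pcarrier (Sl P)"
  show "g (Inf_P (Sl P) SS) = Inf_P L (g ` SS)" using Inf_Sl[OF SS] g_Inf SS by simp
next
  fix S T assume "S \<in> pcarrier (Sl P)" "T \<in> pcarrier (Sl P)"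
  thus "g (join_P (Sl P) S T) = Lj (g S) (g T)" using g_join by simp
next
  show "g (bot_P (Sl P)) = Lbot" using bot_Sl g_bot by simp
next
  show "g ` closed (Sl P) \<subseteq> closed L" using g_cs f_closed by auto
qed

lemma uniq: assumes h: "top_coframe_hom (Sl P) L h" and hf: "\<forall>u\<in>C. h (cs u) = f u"
  and S: "subl S" shows "h S = g S"
proof -
  have hI: "\<And>SS. SS \<subseteq> pcarrier (Sl P) \<Longrightarrow> h (Inf_P (Sl P) SS) = Inf_P L (h ` SS)"
    using h unfolding top_coframe_hom_def coframe_hom_def by blast
  have hJ: "\<And>X Y. subl X \<Longrightarrow> subl Y \<Longrightarrow> h (join_P (Sl P) X Y) = Lj (h X) (h Y)"
    using h unfolding top_coframe_hom_def coframe_hom_def by simp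
  have hB: "h {tp} = Lbot" using h bot_Sl unfolding top_coframe_hom_def coframe_hom_def by simp
  have hC: "\<And>X. subl X \<Longrightarrow> h X \<in> LC" using h unfolding top_coframe_hom_def coframe_hom_def by auto
  have hT: "h C = Ltop" using hI[of "{}"] top_Sl Inf_Sl[of "{}"] unfolding top_P_def by simp
  have hM: "\<And>X Y. subl X \<Longrightarrow> subl Y \<Longrightarrow> h (X \<inter> Y) = Lm (h X) (h Y)"
  proof -
    fix X Y assume X: "subl X" and Y: "subl Y"
    have "h (meet_P (Sl P) X Y) = Lm (h X) (h Y)" unfolding meet_P_def using hI[of "{X,Y}"] X Y by simp
    thus "h (X \<inter> Y) = Lm (h X) (h Y)" using meet_Sl[OF X Y] by simp
  qed
  have hO: "\<And>u. u \<in> C \<Longrightarrow> h (opn P u) = comp (f u)"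
  proof -
    fix u assume u: "u \<in> C"
    have o: "subl (opn P u)" using opn_subl[OF u] .
    have 1: "Lm (f u) (h (opn P u)) = Lbot"
      using hM[OF cs_subl[OF u] o] cs_opn_meet[OF u] hB hf u by simp
    have 2: "Lj (f u) (h (opn P u)) = Ltop"
      using hJ[OF cs_subl[OF u] o] join_cs_opn[OF u u] D_self[OF u] hT hf u by simp
    show "h (opn P u) = comp (f u)"
      using compl_unique[OF f_in[OF u] hC[OF o] comp(1)[OF f_closed[OF u]] 1 2
        comp(2)[OF f_closed[OF u]] comp(3)[OF f_closed[OF u]]] .
  qed
  have hD: "\<And>a. a \<in> C \<Longrightarrow> h (Dset P (nu P S a) a) = trm S a"
  proof -
    fix a assume a: "a \<in> C"
    have n: "nu P S a \<in> C" using S by simp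
    have "h (Dset P (nu P S a) a) = h (join_P (Sl P) (cs (nu P S a)) (opn P a))"
      using join_cs_opn[OF n a] by simp
    also have "\<dots> = Lj (f (nu P S a)) (comp (f a))"
      using hJ[OF cs_subl[OF n] opn_subl[OF a]] hf hO[OF a] n by simp
    finally show "h (Dset P (nu P S a) a) = trm S a" unfolding trm_def .
  qed
  let ?DD = "(\<lambda>a. Dset P (nu P S a) a) ` C"
  have DD: "?DD \<subseteq> pcarrier (Sl P)" using Dset_subl S by auto
  have "h S = h (Inf_P (Sl P) ?DD)" using S_eq_Int_D[OF S] Inf_Sl[OF DD] by simp
  also have "\<dots> = Inf_P L (h ` ?DD)" using hI[OF DD] .
  also have "h ` ?DD = (\<lambda>a. trm S a) ` C" using hD by (auto simp: image_iff)
  finally show ?thesis unfolding g_def .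
qed

end

theorem mainTheorem17:
  fixes \<Omega> :: "'a pos"
  assumes "is_frame \<Omega>"
  shows "strong_top_coframe (Sl \<Omega>)
    \<and> frame_hom \<Omega> (meetC_op (Sl \<Omega>)) (closed_subl \<Omega>)
    \<and> bij_betw (closed_subl \<Omega>) (pcarrier \<Omega>) (meetC (Sl \<Omega>))
    \<and> (\<forall>(L :: 'b tcof) f. strong_top_coframe L \<and> frame_hom \<Omega> (meetC_op L) f \<longrightarrow>
         (\<exists>g. top_coframe_hom (Sl \<Omega>) L g
              \<and> (\<forall>u\<in>pcarrier \<Omega>. g (closed_subl \<Omega> u) = f u)
              \<and> (\<forall>h. top_coframe_hom (Sl \<Omega>) L h
                     \<and> (\<forall>u\<in>pcarrier \<Omega>. h (closed_subl \<Omega> u) = f u)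
                     \<longrightarrow> (\<forall>S\<in>pcarrier (Sl \<Omega>). h S = g S))))"
proof -
  have cl: "complete_lat \<Omega>" using assms unfolding is_frame_def by simp
  have di: "\<forall>a\<in>pcarrier \<Omega>. \<forall>S. S \<subseteq> pcarrier \<Omega> \<longrightarrow>
        meet_P \<Omega> a (Sup_P \<Omega> S) = Sup_P \<Omega> ((\<lambda>s. meet_P \<Omega> a s) ` S)"
    using assms unfolding is_frame_def by simp
  interpret frm \<Omega>
  proof (unfold_locales)
    show "complete_lat \<Omega>" by (rule cl)
    fix a S assume "a \<in> pcarrier \<Omega>" "S \<subseteq> pcarrier \<Omega>"
    thus "meet_P \<Omega> a (Sup_P \<Omega> S) = Sup_P \<Omega> ((\<lambda>s. meet_P \<Omega> a s) ` S)" using di by blast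
  qed
  have 4: "\<forall>(L :: 'b tcof) f. strong_top_coframe L \<and> frame_hom \<Omega> (meetC_op L) f \<longrightarrow>
         (\<exists>g. top_coframe_hom (Sl \<Omega>) L g
              \<and> (\<forall>u\<in>pcarrier \<Omega>. g (closed_subl \<Omega> u) = f u)
              \<and> (\<forall>h. top_coframe_hom (Sl \<Omega>) L h
                     \<and> (\<forall>u\<in>pcarrier \<Omega>. h (closed_subl \<Omega> u) = f u)
                     \<longrightarrow> (\<forall>S\<in>pcarrier (Sl \<Omega>). h S = g S)))"
  proof (intro allI impI)
    fix L :: "'b tcof" and f
    assume "strong_top_coframe L \<and> frame_hom \<Omega> (meetC_op L) f"
    then interpret univ \<Omega> L f by unfold_locales (elim conjE, assumption)+
    show "\<exists>g. top_coframe_hom (Sl \<Omega>) L g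
              \<and> (\<forall>u\<in>pcarrier \<Omega>. g (closed_subl \<Omega> u) = f u)
              \<and> (\<forall>h. top_coframe_hom (Sl \<Omega>) L h
                     \<and> (\<forall>u\<in>pcarrier \<Omega>. h (closed_subl \<Omega> u) = f u)
                     \<longrightarrow> (\<forall>S\<in>pcarrier (Sl \<Omega>). h S = g S))"
    proof (intro exI[of _ g] conjI allI impI ballI)
      show "top_coframe_hom (Sl \<Omega>) L g" by (rule g_hom)
      fix u assume "u \<in> pcarrier \<Omega>" thus "g (closed_subl \<Omega> u) = f u" by (rule g_cs)
    next
      fix h S assume "top_coframe_hom (Sl \<Omega>) L h \<and> (\<forall>u\<in>pcarrier \<Omega>. h (closed_subl \<Omega> u) = f u)"
        and "S \<in> pcarrier (Sl \<Omega>)"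
      thus "h S = g S" using uniq by simp
    qed
  qed
  show ?thesis using Sl_strong cs_frame_hom cs_bij 4 by (intro conjI)
qed


end
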